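(* Let $p\ne q$ be primes and $G=\mathbb{Z}_p^2\times\mathbb{Z}_q^2$. If $S\subseteq G$ is spectral and $|S|=pq$, then $S$ is a tile of $G$.
   Context: For $w=(u,v)\in G$ ($u\in\mathbb{Z}_p^2$, $v\in\mathbb{Z}_q^2$) define the character $\chi_w(a,b)=\exp\big(2\pi i(\tfrac{u\cdot a}{p}+\tfrac{v\cdot b}{q})\big)$, and $\chi(S)=\sum_{s\in S}\chi(s)$. $S$ is spectral if there is $\Lambda\subseteq G$ with $|\Lambda|=|S|$ and $\chi_{\lambda-\lambda'}(S)=0$ for all distinct $\lambda,\lambda'\in\Lambda$. $S$ is a tile if there is $T\subseteq G$ with $S+T=G$ and $|S||T|=|G|$. *)

theory Defs
  imports "HOL-Analysis.Analysis"
begin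

type_synonym elt = "(int \<times> int) \<times> (int \<times> int)"

definition grp :: "int \<Rightarrow> int \<Rightarrow> elt set" where
  "grp p q = ({0..<p} \<times> {0..<p}) \<times> ({0..<q} \<times> {0..<q})"

definition gadd :: "int \<Rightarrow> int \<Rightarrow> elt \<Rightarrow> elt \<Rightarrow> elt" where
  "gadd p q x y =
     (((fst (fst x) + fst (fst y)) mod p, (snd (fst x) + snd (fst y)) mod p),
      ((fst (snd x) + fst (snd y)) mod q, (snd (snd x) + snd (snd y)) mod q))"

definition gsub :: "int \<Rightarrow> int \<Rightarrow> elt \<Rightarrow> elt \<Rightarrow> elt" where
  "gsub p q x y =
     (((fst (fst x) - fst (fst y)) mod p, (snd (fst x) - snd (fst y)) mod p),
      ((fst (snd x) - fst (snd y)) mod q, (snd (snd x) - snd (snd y)) mod q))"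

definition chr :: "int \<Rightarrow> int \<Rightarrow> elt \<Rightarrow> elt \<Rightarrow> complex" where
  "chr p q w s =
     exp (2 * pi * \<i> * complex_of_real
       ((fst (fst w) * fst (fst s) + snd (fst w) * snd (fst s)) / p
      + (fst (snd w) * fst (snd s) + snd (snd w) * snd (snd s)) / q))"

definition chr_set :: "int \<Rightarrow> int \<Rightarrow> elt \<Rightarrow> elt set \<Rightarrow> complex" where
  "chr_set p q w S = (\<Sum>s\<in>S. chr p q w s)"

definition spectral :: "int \<Rightarrow> int \<Rightarrow> elt set \<Rightarrow> bool" where
  "spectral p q S \<longleftrightarrow>
     (\<exists>L. L \<subseteq> grp p q \<and> card L = card S \<and>
        (\<forall>l\<in>L. \<forall>m\<in>L. l \<noteq> m \<longrightarrow> chr_set p q (gsub p q l m) S = 0))"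

definition tile :: "int \<Rightarrow> int \<Rightarrow> elt set \<Rightarrow> bool" where
  "tile p q S \<longleftrightarrow>
     (\<exists>T. T \<subseteq> grp p q \<and> {gadd p q s t | s t. s \<in> S \<and> t \<in> T} = grp p q
        \<and> card S * card T = card (grp p q))"

end

theory Submission
  imports Defs "HOL-Computational_Algebra.Polynomial" "HOL-Number_Theory.Cong"
begin

definition ipoly :: "int poly \<Rightarrow> complex \<Rightarrow> complex" where
  "ipoly G z = poly (map_poly of_int G) z"

lemma mp_add: "map_poly (of_int :: int \<Rightarrow> complex) (G + H) = map_poly of_int G + map_poly of_int H"
  by (rule poly_eqI) (simp add: coeff_map_poly)

lemma mp_diff: "map_poly (of_int :: int \<Rightarrow> complex) (G - H) = map_poly of_int G - map_poly of_int H"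
  by (rule poly_eqI) (simp add: coeff_map_poly)

lemma mp_mult: "map_poly (of_int :: int \<Rightarrow> complex) (G * H) = map_poly of_int G * map_poly of_int H"
  by (rule poly_eqI) (simp add: coeff_map_poly coeff_mult)

lemma ipoly_add[simp]: "ipoly (G + H) z = ipoly G z + ipoly H z"
  by (simp add: ipoly_def mp_add)
lemma ipoly_diff[simp]: "ipoly (G - H) z = ipoly G z - ipoly H z"
  by (simp add: ipoly_def mp_diff)
lemma ipoly_mult[simp]: "ipoly (G * H) z = ipoly G z * ipoly H z"
  by (simp add: ipoly_def mp_mult)
lemma ipoly_pow[simp]: "ipoly (G ^ n) z = ipoly G z ^ n"
  by (induction n) (auto simp: ipoly_def mp_mult)
lemma ipoly_const[simp]: "ipoly [:c:] z = of_int c"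
  by (cases "c = 0") (simp_all add: ipoly_def map_poly_pCons)
lemma ipoly_0[simp]: "ipoly 0 z = 0"
  by (simp add: ipoly_def)
lemma ipoly_1[simp]: "ipoly 1 z = 1"
  by (simp add: ipoly_def)
lemma ipoly_monom[simp]: "ipoly (monom c n) z = of_int c * z ^ n"
  by (simp add: ipoly_def map_poly_monom poly_monom)
lemma ipoly_smult[simp]: "ipoly (smult c G) z = of_int c * ipoly G z"
  by (simp add: ipoly_def map_poly_smult)
lemma ipoly_sum: "finite A \<Longrightarrow> ipoly (\<Sum>x\<in>A. f x) z = (\<Sum>x\<in>A. ipoly (f x) z)"
  by (induction A rule: finite_induct) auto
lemma ipoly_pcompose: "ipoly (pcompose G H) z = ipoly G (ipoly H z)"
proof (induction G)
  case 0
  then show ?case by simp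
next
  case (pCons a G)
  have "ipoly (pCons a G) w = of_int a + w * ipoly G w" for w
    by (simp add: ipoly_def map_poly_pCons)
  then show ?case using pCons by (simp add: pcompose_pCons)
qed

lemma binom_frob:
  fixes a b :: "'a::comm_ring_1"
  assumes r: "prime r"
  shows "\<exists>E. (a + b) ^ r = a ^ r + b ^ r + of_nat r * E"
proof -
  have r1: "r \<ge> 1" using prime_ge_1_nat[OF r] .
  have "(a + b) ^ r = (\<Sum>k\<in>{0..r}. of_nat (r choose k) * a ^ k * b ^ (r - k))"
    by (simp add: binomial_ring atLeast0AtMost)
  also have "{0..r} = insert 0 (insert r {1..<r})" using r1 by auto
  also have "(\<Sum>k\<in>insert 0 (insert r {1..<r}). of_nat (r choose k) * a ^ k * b ^ (r - k))
     = b ^ r + (a ^ r + (\<Sum>k\<in>{1..<r}. of_nat (r choose k) * a ^ k * b ^ (r - k)))"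
    using r1 by simp
  also have "(\<Sum>k\<in>{1..<r}. of_nat (r choose k) * a ^ k * b ^ (r - k))
      = (\<Sum>k\<in>{1..<r}. of_nat r * (of_nat ((r choose k) div r) * a ^ k * b ^ (r - k)))"
  proof (rule sum.cong)
    fix k assume k: "k \<in> {1..<r}"
    have "r dvd (r choose k)" using k r by (intro dvd_choose_prime) auto
    then have "(r choose k) = r * ((r choose k) div r)" by simp
    then have "(of_nat (r choose k) :: 'a) = of_nat r * of_nat ((r choose k) div r)"
      by (metis of_nat_mult)
    then show "of_nat (r choose k) * a ^ k * b ^ (r - k) = of_nat r * (of_nat ((r choose k) div r) * a ^ k * b ^ (r - k))"
      by (simp add: mult.assoc)
  qed simp
  also have "\<dots> = of_nat r * (\<Sum>k\<in>{1..<r}. of_nat ((r choose k) div r) * a ^ k * b ^ (r - k))"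
    by (simp add: sum_distrib_left)
  finally show ?thesis
    by (intro exI[of _ "\<Sum>k\<in>{1..<r}. of_nat ((r choose k) div r) * a ^ k * b ^ (r - k)"]) (simp add: algebra_simps)
qed

lemma fermat_nat:
  assumes r: "prime r"
  shows "\<exists>e. (int n) ^ r = int n + int r * e"
proof (induction n)
  case 0
  have "r \<noteq> 0" using r by auto
  then show ?case by (intro exI[of _ 0]) simp
next
  case (Suc n)
  then obtain e where e: "(int n) ^ r = int n + int r * e" by blast
  obtain E where E: "(int n + 1) ^ r = int n ^ r + 1 ^ r + of_nat r * E"
    using binom_frob[OF r, of "int n" 1] by blast
  have "int (Suc n) ^ r = int (Suc n) + int r * (e + E)"
    using E e by (simp add: algebra_simps)
  then show ?case by blast
qed

lemma fermat_int:
  assumes r: "prime r"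
  shows "\<exists>e. (c::int) ^ r = c + int r * e"
proof (cases "c \<ge> 0")
  case True
  then obtain e where "(int (nat c)) ^ r = int (nat c) + int r * e" using fermat_nat[OF r] by blast
  then show ?thesis using True by auto
next
  case False
  obtain e where e: "(int (nat (-c))) ^ r = int (nat (-c)) + int r * e" using fermat_nat[OF r] by blast
  have nc: "int (nat (-c)) = - c" using False by simp
  have e': "(-c) ^ r = -c + int r * e" using e unfolding nc .
  show ?thesis
  proof (cases "even r")
    case True
    have r2: "r \<ge> 2" by (rule prime_ge_2_nat[OF r])
    have "\<not> r > 2" using True prime_odd_nat[OF r] by blast
    then have "r = 2" using r2 by simp
    then have "c ^ r = c + int r * (e - c)" using e' by (simp add: algebra_simps)
    then show ?thesis by blast
  next
    case False
    then have "(-c) ^ r = - (c ^ r)" by simp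
    then have "c ^ r = c + int r * (- e)" using e' by (simp add: algebra_simps)
    then show ?thesis by blast
  qed
qed

lemma frob_poly:
  assumes r: "prime r"
  shows "\<exists>E. (G :: int poly) ^ r = pcompose G (monom 1 r) + smult (int r) E"
proof (induction G)
  case 0
  then show ?case using prime_gt_0_nat[OF r] by (auto simp: power_0_left)
next
  case (pCons c G)
  then obtain E2 where E2: "G ^ r = pcompose G (monom 1 r) + smult (int r) E2" by blast
  have pc: "pCons c G = [:c:] + [:0,1:] * G"
    by simp
  obtain E1 where E1: "([:c:] + [:0,1:] * G) ^ r = [:c:] ^ r + ([:0,1:] * G) ^ r + of_nat r * E1"
    using binom_frob[OF r] by blast
  obtain e where e: "c ^ r = c + int r * e" using fermat_int[OF r] by blast
  have x: "([:0,1:] :: int poly) ^ r = monom 1 r"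
    by (simp add: monom_altdef)
  have cp: "[:c:] ^ r = [:c ^ r:]" by (simp add: poly_const_pow)
  have ofn: "(of_nat r :: int poly) * E1 = smult (int r) E1"
    by (simp add: of_nat_poly)
  have "(pCons c G) ^ r = ([:c:] + [:0,1:] * G) ^ r" by (rule arg_cong[OF pc])
  also have "\<dots> = [:c ^ r:] + monom 1 r * G ^ r + smult (int r) E1"
  proof -
    have xg: "([:0,1:] * G) ^ r = monom 1 r * G ^ r" by (simp only: power_mult_distrib x)
    show ?thesis using E1 by (simp only: cp xg ofn)
  qed
  also have "\<dots> = [:c:] + [:int r * e:] + monom 1 r * (pcompose G (monom 1 r) + smult (int r) E2) + smult (int r) E1"
    by (simp only: e E2 flip: add_pCons) simp
  also have "\<dots> = pcompose (pCons c G) (monom 1 r) + smult (int r) ([:e:] + monom 1 r * E2 + E1)"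
    by (simp add: pcompose_pCons algebra_simps smult_add_right)
  finally show ?case by blast
qed


definition minp :: "complex \<Rightarrow> int poly \<Rightarrow> bool" where
  "minp z f \<longleftrightarrow> lead_coeff f = 1 \<and> ipoly f z = 0 \<and> (\<forall>G. ipoly G z = 0 \<longrightarrow> f dvd G)"

lemma content_Xn:
  assumes "n > 0"
  shows "content (monom 1 n - 1 :: int poly) = 1"
proof -
  have "coeff (monom 1 n - 1 :: int poly) n = 1" using assms by simp
  then have "content (monom 1 n - 1 :: int poly) dvd 1" by (metis content_dvd_coeff)
  then have "normalize (content (monom 1 n - 1 :: int poly)) = 1"
    using is_unit_normalize by blast
  then show ?thesis by (simp only: normalize_content)
qed

lemma Xn_nz:
  assumes "n > 0"
  shows "(monom 1 n - 1 :: int poly) \<noteq> 0"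
proof
  assume "(monom 1 n - 1 :: int poly) = 0"
  then have "coeff (monom 1 n - 1 :: int poly) n = 0" by simp
  then show False using assms by simp
qed

lemma exists_minp:
  assumes zn: "z ^ n = 1" and n: "n > 0"
  shows "\<exists>f. minp z f"
proof -
  define Xn where "Xn = (monom 1 n - 1 :: int poly)"
  have Xn0: "Xn \<noteq> 0" using Xn_nz[OF n] by (simp add: Xn_def)
  have Xnz: "ipoly Xn z = 0" using zn by (simp add: Xn_def)
  define Pr where "Pr = (\<lambda>d. \<exists>P. P \<noteq> 0 \<and> ipoly P z = 0 \<and> degree P = d)"
  have ex: "Pr (degree Xn)" unfolding Pr_def using Xn0 Xnz by blast
  define d where "d = (LEAST d. Pr d)"
  have "Pr d" unfolding d_def by (rule LeastI[of Pr, OF ex])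
  then obtain P0 where P0: "P0 \<noteq> 0" "ipoly P0 z = 0" "degree P0 = d" unfolding Pr_def by blast
  have mind: "d \<le> degree P" if "P \<noteq> 0" "ipoly P z = 0" for P
    unfolding d_def by (rule Least_le) (use that in \<open>auto simp: Pr_def\<close>)
  define P1 where "P1 = primitive_part P0"
  have cP0: "content P0 \<noteq> 0" using P0(1) by simp
  have P0eq: "P0 = smult (content P0) P1" unfolding P1_def by (simp add: content_times_primitive_part)
  have P1z: "ipoly P1 z = 0"
  proof -
    have "of_int (content P0) * ipoly P1 z = 0" using P0(2) P0eq by (metis ipoly_smult)
    then show ?thesis using cP0 by simp
  qed
  have P1d: "degree P1 = d" unfolding P1_def using P0(3) by simp
  have P1nz: "P1 \<noteq> 0" using P0(1) P0eq by auto
  have divP: "\<exists>q. smult (lead_coeff P ^ (Suc (degree G) - degree P)) G = P * q"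
    if "ipoly G z = 0" "ipoly P z = 0" "P \<noteq> 0" "degree P = d" for G P
  proof -
    obtain q r where qr: "pseudo_divmod G P = (q, r)" by (cases "pseudo_divmod G P") auto
    have e1: "smult (lead_coeff P ^ (Suc (degree G) - degree P)) G = P * q + r"
      by (rule pseudo_divmod(1)[OF that(3) qr])
    have e2: "r = 0 \<or> degree r < degree P" by (rule pseudo_divmod(2)[OF that(3) qr])
    have "ipoly r z = of_int (lead_coeff P ^ (Suc (degree G) - degree P)) * ipoly G z - ipoly P z * ipoly q z"
      using arg_cong[OF e1, of "\<lambda>X. ipoly X z"] by simp
    then have rz: "ipoly r z = 0" using that by simp
    have "r = 0"
    proof (rule ccontr)
      assume "r \<noteq> 0"
      then have "d \<le> degree r" using mind rz by blast
      moreover have "degree r < d" using e2 \<open>r \<noteq> 0\<close> that by simp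
      ultimately show False by simp
    qed
    then show ?thesis using e1 by auto
  qed
  obtain q where q: "smult (lead_coeff P1 ^ (Suc (degree Xn) - degree P1)) Xn = P1 * q"
    using divP[OF Xnz P1z P1nz P1d] by blast
  define a where "a = lead_coeff P1 ^ (Suc (degree Xn) - degree P1)"
  have a0: "a \<noteq> 0" unfolding a_def using P1nz by simp
  have cP1: "content P1 = 1" unfolding P1_def using P0(1) by (simp add: content_primitive_part)
  have "content (smult a Xn) = normalize a" using content_Xn[OF n] by (simp add: content_smult Xn_def)
  moreover have "content (P1 * q) = content q" by (simp add: content_mult cP1)
  ultimately have cq: "content q = \<bar>a\<bar>" using q by (simp add: a_def)
  have "smult a Xn = smult \<bar>a\<bar> (P1 * primitive_part q)"
    using q cq by (metis a_def content_times_primitive_part mult_smult_right)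
  also have "\<bar>a\<bar> = sgn a * a" by (simp add: abs_sgn mult.commute sgn_mult_abs)
  finally have "smult a Xn = smult a (smult (sgn a) (P1 * primitive_part q))"
    by (simp add: mult.commute)
  then have Xe: "Xn = smult (sgn a) (P1 * primitive_part q)" by (rule smult_cancel[OF a0])
  have cXn: "coeff Xn n = 1" using n by (simp add: Xn_def)
  have "degree Xn \<le> n" unfolding Xn_def
    by (rule order.trans[OF degree_diff_le_max]) (simp add: degree_monom_le)
  moreover have "n \<le> degree Xn" using cXn by (intro le_degree) simp
  ultimately have "degree Xn = n" by simp
  then have "lead_coeff Xn = 1" using cXn by simp
  then have "sgn a * (lead_coeff P1 * lead_coeff (primitive_part q)) = 1"
    using Xe by (metis lead_coeff_mult lead_coeff_smult)
  then have "lead_coeff P1 * (sgn a * lead_coeff (primitive_part q)) = 1" by (simp add: algebra_simps)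
  then have lc: "lead_coeff P1 = 1 \<or> lead_coeff P1 = -1" using zmult_eq_1_iff by blast
  define f where "f = smult (lead_coeff P1) P1"
  have flc: "lead_coeff f = 1" unfolding f_def using lc by auto
  have fz: "ipoly f z = 0" unfolding f_def using P1z by simp
  have fd: "degree f = d" unfolding f_def using lc P1d by auto
  have fnz: "f \<noteq> 0" using flc by auto
  have "f dvd G" if G0: "ipoly G z = 0" for G
  proof -
    obtain q where "smult (lead_coeff f ^ (Suc (degree G) - degree f)) G = f * q"
      using divP[OF G0 fz fnz fd] by blast
    then have "G = f * q" using flc by simp
    then show ?thesis by simp
  qed
  then have "minp z f" unfolding minp_def using flc fz by blast
  then show ?thesis by blast
qed


lemma minp_transfer:
  assumes f: "minp z f" and fw: "ipoly f w = 0" and wn: "w ^ n = 1" and n: "n > 0"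
  shows "minp w f"
proof -
  obtain g where g: "minp w g" using exists_minp[OF wn n] by blast
  have "g dvd f" using g fw unfolding minp_def by blast
  then obtain h where h: "f = g * h" by (elim dvdE)
  have "ipoly g z * ipoly h z = 0" using f h unfolding minp_def by (metis ipoly_mult)
  then consider "ipoly g z = 0" | "ipoly h z = 0" by auto
  then show ?thesis
  proof cases
    case 1
    then have fg: "f dvd g" using f unfolding minp_def by blast
    show ?thesis unfolding minp_def
    proof (intro conjI allI impI)
      show "lead_coeff f = 1" using f unfolding minp_def by blast
      show "ipoly f w = 0" by (rule fw)
      fix G assume "ipoly G w = 0"
      then have "g dvd G" using g unfolding minp_def by blast
      then show "f dvd G" using fg by (metis dvd_trans)
    qed
  next
    case 2
    then have "f dvd h" using f unfolding minp_def by blast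
    then obtain v where v: "h = f * v" by (elim dvdE)
    have fnz: "f \<noteq> 0" using f unfolding minp_def by auto
    have "f * 1 = f * (g * v)" using h v by (simp add: algebra_simps)
    then have "g * v = 1" using fnz by (metis mult_left_cancel)
    then have "ipoly g w * ipoly v w = 1" by (metis ipoly_mult ipoly_1)
    moreover have "ipoly g w = 0" using g unfolding minp_def by blast
    ultimately show ?thesis by simp
  qed
qed

lemma coeff_lemma:
  fixes f C D :: "int poly" and r c :: int
  assumes flc: "lead_coeff f = 1" and fd: "degree f \<ge> 1" and r: "r > 1"
    and eq: "[:c:] = f * C + smult r D"
  shows "r dvd c"
proof (rule ccontr)
  assume nd: "\<not> r dvd c"
  define J where "J = {i. \<not> r dvd coeff C i}"
  have Jfin: "finite J"
  proof (rule finite_subset)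
    show "J \<subseteq> {..degree C}"
    proof
      fix i assume "i \<in> J"
      then have "coeff C i \<noteq> 0" unfolding J_def by auto
      then show "i \<in> {..degree C}" using le_degree by auto
    qed
  qed simp
  show False
  proof (cases "J = {}")
    case True
    then have "r dvd coeff C 0" unfolding J_def by auto
    moreover have "c = coeff f 0 * coeff C 0 + r * coeff D 0"
      using arg_cong[OF eq, of "\<lambda>X. coeff X 0"] by (simp add: coeff_mult)
    ultimately have "r dvd c" by simp
    then show False using nd by simp
  next
    case False
    define j where "j = Max J"
    have jJ: "j \<in> J" unfolding j_def using Jfin False by simp
    have above: "r dvd coeff C i" if "i > j" for i
    proof (rule ccontr)
      assume "\<not> r dvd coeff C i"
      then have "i \<in> J" unfolding J_def by simp
      then have "i \<le> j" unfolding j_def using Jfin by simp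
      then show False using that by simp
    qed
    define d where "d = degree f"
    have cfd: "coeff f d = 1" using flc unfolding d_def by simp
    have sum_eq: "coeff (f * C) (d + j) = (\<Sum>i\<le>d + j. coeff f i * coeff C (d + j - i))"
      by (simp add: coeff_mult)
    have split: "(\<Sum>i\<le>d + j. coeff f i * coeff C (d + j - i))
        = coeff f d * coeff C (d + j - d) + (\<Sum>i\<in>{..d + j} - {d}. coeff f i * coeff C (d + j - i))"
      by (subst sum.remove[of _ d]) auto
    have rest: "r dvd (\<Sum>i\<in>{..d + j} - {d}. coeff f i * coeff C (d + j - i))"
    proof (rule dvd_sum)
      fix i assume i: "i \<in> {..d + j} - {d}"
      show "r dvd coeff f i * coeff C (d + j - i)"
      proof (cases "i < d")
        case True
        then have "d + j - i > j" by simp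
        then show ?thesis using above by simp
      next
        case False
        then have "i > d" using i by auto
        then have "coeff f i = 0" unfolding d_def by (simp add: coeff_eq_0)
        then show ?thesis by simp
      qed
    qed
    have "coeff [:c:] (d + j) = 0" using fd unfolding d_def by (simp add: coeff_pCons split: nat.split)
    then have "0 = coeff (f * C) (d + j) + r * coeff D (d + j)"
      using arg_cong[OF eq, of "\<lambda>X. coeff X (d + j)"] by simp
    then have "0 = coeff C j + (\<Sum>i\<in>{..d + j} - {d}. coeff f i * coeff C (d + j - i)) + r * coeff D (d + j)"
      using sum_eq split cfd by simp
    then have "coeff C j = - ((\<Sum>i\<in>{..d + j} - {d}. coeff f i * coeff C (d + j - i)) + r * coeff D (d + j))"
      by (simp add: algebra_simps)
    moreover have "r dvd - ((\<Sum>i\<in>{..d + j} - {d}. coeff f i * coeff C (d + j - i)) + r * coeff D (d + j))"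
      using rest by simp
    ultimately have "r dvd coeff C j" by simp
    then show False using jJ unfolding J_def by simp
  qed
qed


lemma dedekind_step:
  assumes f: "minp w f" and wn: "w ^ n = 1" and n: "n > 0" and r: "prime r" and nd: "\<not> r dvd n"
  shows "ipoly f (w ^ r) = 0"
proof (rule ccontr)
  assume fr: "ipoly f (w ^ r) \<noteq> 0"
  define Xn where "Xn = (monom 1 n - 1 :: int poly)"
  have "ipoly Xn w = 0" using wn by (simp add: Xn_def)
  then have "f dvd Xn" using f unfolding minp_def by blast
  then obtain g where g: "Xn = f * g" by (elim dvdE)
  have "ipoly Xn (w ^ r) = 0" using wn by (simp add: Xn_def flip: power_mult) (simp add: mult.commute power_mult)
  then have "ipoly f (w ^ r) * ipoly g (w ^ r) = 0" using g by simp
  then have gr: "ipoly g (w ^ r) = 0" using fr by simp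
  define Gr where "Gr = pcompose g (monom 1 r)"
  have "ipoly Gr w = 0" using gr by (simp add: Gr_def ipoly_pcompose)
  then have "f dvd Gr" using f unfolding minp_def by blast
  then obtain k where k: "Gr = f * k" by (elim dvdE)
  obtain E where E: "g ^ r = Gr + smult (int r) E" using frob_poly[OF r] unfolding Gr_def by blast
  define A where "A = [:0,1:] * pderiv g - smult (int n) g"
  define B where "B = [:0,1:] * pderiv f"
  have "f * A + g * B = [:0,1:] * pderiv (f * g) - smult (int n) (f * g)"
    by (simp add: A_def B_def pderiv_mult algebra_simps)
  also have "\<dots> = [:0,1:] * pderiv Xn - smult (int n) Xn" by (simp add: g)
  also have "pderiv Xn = monom (int n) (n - 1)" by (simp add: Xn_def pderiv_diff pderiv_monom)
  also have "[:0,1:] * monom (int n) (n - 1) = monom (int n) n"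
    using n by (cases n) (simp_all add: monom_Suc)
  also have "monom (int n) n - smult (int n) Xn = [:int n:]"
    by (simp add: Xn_def smult_diff_right smult_monom one_pCons)
  finally have bez: "f * A + g * B = [:int n:]" .
  define S where "S = (\<Sum>i<r. (g * B) ^ (r - Suc i) * (f * A + g * B) ^ i)"
  have "(f * A + g * B) ^ r - (g * B) ^ r = (f * A) * S"
    unfolding S_def by (subst power_diff_sumr2) simp
  then have "[:int n:] ^ r = f * (A * S) + B ^ r * g ^ r"
    using bez by (simp add: algebra_simps power_mult_distrib)
  also have "\<dots> = f * (A * S + B ^ r * k) + smult (int r) (B ^ r * E)"
    by (simp add: E k algebra_simps)
  finally have eq: "[:int n ^ r:] = f * (A * S + B ^ r * k) + smult (int r) (B ^ r * E)"
    by (simp add: poly_const_pow)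
  have flc: "lead_coeff f = 1" using f unfolding minp_def by blast
  have fd: "degree f \<ge> 1"
  proof (rule ccontr)
    assume "\<not> degree f \<ge> 1"
    then have "degree f = 0" by simp
    then have "f = [:1:]" using flc degree_0_id[of f] by simp
    then have "ipoly f w = 1" by simp
    then show False using f unfolding minp_def by simp
  qed
  have r1: "int r > 1" using prime_gt_1_nat[OF r] by simp
  have "int r dvd int n ^ r" by (rule coeff_lemma[OF flc fd r1 eq])
  then have "r dvd n ^ r" by (metis of_nat_dvd_iff of_nat_power)
  then have "r dvd n" using r prime_dvd_power by blast
  then show False using nd by simp
qed

lemma galois_all:
  assumes f: "minp z f" and zn: "z ^ n = 1" and n: "n > 0"
  shows "k > 0 \<Longrightarrow> coprime k n \<Longrightarrow> ipoly f (z ^ k) = 0"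
proof (induction k rule: less_induct)
  case (less k)
  show ?case
  proof (cases "k = 1")
    case True
    then show ?thesis using f unfolding minp_def by simp
  next
    case False
    then obtain r where r: "prime r" "r dvd k" using prime_factor_nat by blast
    then obtain k' where k': "k = r * k'" by (elim dvdE)
    have k'0: "k' > 0" using less.prems(1) k' by (cases k') auto
    have r1: "r > 1" using prime_gt_1_nat[OF r(1)] .
    have k'lt: "k' < k" using k' k'0 r1 by simp
    have cop': "coprime k' n" using less.prems(2) k' by simp
    have IH: "ipoly f (z ^ k') = 0" using less.IH[OF k'lt k'0 cop'] .
    have zk'n: "(z ^ k') ^ n = 1" using zn by (metis mult.commute power_mult power_one)
    have m: "minp (z ^ k') f" by (rule minp_transfer[OF f IH zk'n n])
    have nd: "\<not> r dvd n"
    proof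
      assume "r dvd n"
      then have "r dvd gcd k n" using r(2) by simp
      then have "r dvd 1" using less.prems(2) by simp
      then show False using r1 by simp
    qed
    have "ipoly f ((z ^ k') ^ r) = 0" by (rule dedekind_step[OF m zk'n n r(1) nd])
    then show ?thesis using k' by (simp add: power_mult mult.commute)
  qed
qed

lemma galois:
  assumes zn: "z ^ n = 1" and n: "n > 0" and G: "ipoly G z = 0" and k: "k > 0" "coprime k n"
  shows "ipoly G (z ^ k) = 0"
proof -
  obtain f where f: "minp z f" using exists_minp[OF zn n] by blast
  then have "f dvd G" using G unfolding minp_def by blast
  then obtain h where "G = f * h" by (elim dvdE)
  moreover have "ipoly f (z ^ k) = 0" by (rule galois_all[OF f zn n k])
  ultimately show ?thesis by simp
qed

definition ep :: "real \<Rightarrow> complex" where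
  "ep t = exp (2 * pi * \<i> * complex_of_real t)"

lemma ep_add: "ep (a + b) = ep a * ep b"
  by (simp add: ep_def distrib_left exp_add)

lemma ep_int: "ep (of_int m) = 1"
proof -
  have "ep (of_int m) = exp (complex_of_real (2 * of_int m * pi) * \<i>)"
    by (simp add: ep_def algebra_simps)
  also have "\<dots> = 1" by (rule exp_integer_2pi) simp
  finally show ?thesis .
qed

lemma ep_0[simp]: "ep 0 = 1"
  by (simp add: ep_def)

lemma ep_shift_int: "ep (a + of_int m) = ep a"
  by (simp add: ep_add ep_int)

lemma ep_eqI: "a - b = of_int m \<Longrightarrow> ep a = ep b"
  by (metis add.commute diff_add_cancel ep_shift_int)

lemma ep_cnj: "cnj (ep a) = ep (- a)"
  by (simp add: ep_def exp_cnj)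

lemma ep_norm: "ep a * cnj (ep a) = 1"
  by (simp add: ep_cnj flip: ep_add)

lemma ep_pow: "ep a ^ k = ep (of_nat k * a)"
proof -
  have "ep (of_nat k * a) = exp (of_nat k * (2 * pi * \<i> * complex_of_real a))"
    by (simp add: ep_def algebra_simps)
  also have "\<dots> = ep a ^ k" by (simp add: exp_of_nat_mult ep_def)
  finally show ?thesis by simp
qed

lemma ep_eq_1: "ep a = 1 \<longleftrightarrow> a \<in> \<int>"
proof
  assume "a \<in> \<int>"
  then obtain m where "a = of_int m" by (elim Ints_cases)
  then show "ep a = 1" by (simp add: ep_int)
next
  assume "ep a = 1"
  then have "exp (2 * pi * \<i> * complex_of_real a) = 1" by (simp add: ep_def)
  then obtain n :: int where "Im (2 * pi * \<i> * complex_of_real a) = of_int (2 * n) * pi"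
    by (auto simp: exp_eq_1)
  then have "2 * pi * a = 2 * of_int n * pi" by simp
  then have "a = of_int n" by simp
  then show "a \<in> \<int>" by simp
qed

lemma geom:
  fixes M :: nat and t :: int
  assumes M: "M > 0"
  shows "(\<Sum>k<M. ep (real k * of_int t / real M)) = (if int M dvd t then of_nat M else 0)"
proof -
  define z where "z = ep (of_int t / real M)"
  have zk: "ep (real k * of_int t / real M) = z ^ k" for k
    by (simp add: z_def ep_pow)
  have zM: "z ^ M = 1" using M by (simp add: z_def ep_pow ep_int)
  have z1: "z = 1 \<longleftrightarrow> int M dvd t"
  proof
    assume "z = 1"
    then have "of_int t / real M \<in> \<int>" by (simp add: z_def ep_eq_1)
    then obtain m where m: "of_int t / real M = of_int m" by (elim Ints_cases)
    then have "of_int t = real M * of_int m" using M by (simp add: field_simps)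
    then have "t = int M * m" by (metis of_int_eq_iff of_int_mult of_int_of_nat_eq)
    then show "int M dvd t" by simp
  next
    assume "int M dvd t"
    then obtain m where "t = int M * m" by (elim dvdE)
    then have "of_int t / real M = of_int m" using M by simp
    then show "z = 1" by (simp add: z_def ep_int)
  qed
  have "(\<Sum>k<M. ep (real k * of_int t / real M)) = (\<Sum>k<M. z ^ k)" by (simp add: zk)
  also have "\<dots> = (if z = 1 then of_nat M else (1 - z ^ M) / (1 - z))" by (rule sum_gp_strict)
  also have "\<dots> = (if int M dvd t then of_nat M else 0)" using zM z1 by simp
  finally show ?thesis .
qed

lemma inv1:
  fixes X :: "'a set" and s :: "'a \<Rightarrow> int" and M :: nat and c :: int
  assumes X: "finite X" and M: "M > 0"
  shows "(\<Sum>k<M. ep (- (real k * of_int c / real M)) * (\<Sum>x\<in>X. ep (real k * of_int (s x) / real M)))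
       = of_nat M * of_nat (card {x\<in>X. int M dvd s x - c})"
proof -
  have trm: "ep (- (real k * of_int c / real M)) * ep (real k * of_int (s x) / real M)
      = ep (real k * of_int (s x - c) / real M)" for k x
    by (simp flip: ep_add add: algebra_simps diff_divide_distrib)
  have "(\<Sum>k<M. ep (- (real k * of_int c / real M)) * (\<Sum>x\<in>X. ep (real k * of_int (s x) / real M)))
      = (\<Sum>k<M. \<Sum>x\<in>X. ep (real k * of_int (s x - c) / real M))"
    by (simp only: sum_distrib_left trm)
  also have "\<dots> = (\<Sum>x\<in>X. \<Sum>k<M. ep (real k * of_int (s x - c) / real M))"
    by (rule sum.swap)
  also have "\<dots> = (\<Sum>x\<in>X. if int M dvd s x - c then of_nat M else 0)"
    by (simp only: geom[OF M])
  also have "\<dots> = of_nat M * of_nat (card {x\<in>X. int M dvd s x - c})"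
    using X by (simp add: sum.If_cases Int_def)
  finally show ?thesis .
qed

definition FG :: "nat \<Rightarrow> nat \<Rightarrow> 'a set \<Rightarrow> ('a \<Rightarrow> int) \<Rightarrow> ('a \<Rightarrow> int) \<Rightarrow> nat \<Rightarrow> nat \<Rightarrow> complex" where
  "FG M1 M2 X t s k l = (\<Sum>x\<in>X. ep (real k * of_int (t x) / real M1 + real l * of_int (s x) / real M2))"

lemma inv2:
  fixes X :: "'a set" and M1 M2 :: nat and c d :: int
  assumes X: "finite X" and M1: "M1 > 0" and M2: "M2 > 0"
  shows "(\<Sum>k<M1. \<Sum>l<M2. ep (- (real k * of_int c / real M1 + real l * of_int d / real M2)) * FG M1 M2 X t s k l)
       = of_nat M1 * of_nat M2 * of_nat (card {x\<in>X. int M1 dvd t x - c \<and> int M2 dvd s x - d})"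
proof -
  define A where "A = (\<lambda>x k. ep (real k * of_int (t x - c) / real M1))"
  define B where "B = (\<lambda>x l. ep (real l * of_int (s x - d) / real M2))"
  have trm: "ep (- (real k * of_int c / real M1 + real l * of_int d / real M2)) *
      ep (real k * of_int (t x) / real M1 + real l * of_int (s x) / real M2) = A x k * B x l" for k l x
    unfolding A_def B_def by (simp flip: ep_add add: algebra_simps diff_divide_distrib)
  have "(\<Sum>k<M1. \<Sum>l<M2. ep (- (real k * of_int c / real M1 + real l * of_int d / real M2)) * FG M1 M2 X t s k l)
      = (\<Sum>k<M1. \<Sum>l<M2. \<Sum>x\<in>X. A x k * B x l)"
    unfolding FG_def by (simp only: sum_distrib_left trm)
  also have "\<dots> = (\<Sum>k<M1. \<Sum>x\<in>X. \<Sum>l<M2. A x k * B x l)"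
    by (rule sum.cong[OF refl], rule sum.swap)
  also have "\<dots> = (\<Sum>x\<in>X. \<Sum>k<M1. \<Sum>l<M2. A x k * B x l)"
    by (rule sum.swap)
  also have "\<dots> = (\<Sum>x\<in>X. (\<Sum>k<M1. A x k) * (\<Sum>l<M2. B x l))"
    by (simp only: sum_product)
  also have "\<dots> = (\<Sum>x\<in>X. if int M1 dvd t x - c \<and> int M2 dvd s x - d then of_nat M1 * of_nat M2 else 0)"
    unfolding A_def B_def by (simp only: geom[OF M1] geom[OF M2]) (intro sum.cong refl, auto)
  also have "\<dots> = of_nat M1 * of_nat M2 * of_nat (card {x\<in>X. int M1 dvd t x - c \<and> int M2 dvd s x - d})"
    using X by (simp add: sum.If_cases Int_def)
  finally show ?thesis .
qed


lemma GalC: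
  fixes P Q :: nat and X :: "'a set"
  assumes P: "prime P" and Q: "prime Q" and PQ: "P \<noteq> Q" and X: "finite X"
    and F11: "FG P Q X t s 1 1 = 0" and k: "\<not> P dvd k" and l: "\<not> Q dvd l"
  shows "FG P Q X t s k l = 0"
proof -
  have cop: "coprime P Q" using P Q PQ by (simp add: primes_coprime)
  obtain K where K: "[K = k] (mod P)" "[K = l] (mod Q)"
    using binary_chinese_remainder_nat[OF cop] by blast
  have PK: "\<not> P dvd K" using K(1) k cong_dvd_iff by blast
  have QK: "\<not> Q dvd K" using K(2) l cong_dvd_iff by blast
  have K0: "K > 0" using PK by (cases K) auto
  have copK: "coprime K (P * Q)"
    using prime_imp_coprime[OF P PK] prime_imp_coprime[OF Q QK] by (simp add: coprime_commute)
  have P0: "P > 0" and Q0: "Q > 0" using P Q by (auto simp: prime_gt_0_nat)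
  define e where "e x = nat ((int Q * t x + int P * s x) mod int (P * Q))" for x
  define z where "z = ep (1 / real (P * Q))"
  have key: "ep (real j * of_int (t x) / real P + real j * of_int (s x) / real Q) = (z ^ j) ^ (e x)" for j x
  proof -
    define m where "m = (int Q * t x + int P * s x) div int (P * Q)"
    have "int (e x) = (int Q * t x + int P * s x) mod int (P * Q)"
      unfolding e_def using P0 Q0 by (simp del: of_nat_mult)
    also have "\<dots> = int Q * t x + int P * s x - int (P * Q) * m"
      unfolding m_def by (metis minus_div_mult_eq_mod mult.commute)
    finally have "int (e x) = int Q * t x + int P * s x - int (P * Q) * m" .
    then have re: "real (e x) = real Q * of_int (t x) + real P * of_int (s x) - real P * real Q * of_int m"
      by (metis (mono_tags, opaque_lifting) of_int_diff of_int_mult of_int_of_nat_eq of_nat_mult of_int_add)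
    have "(z ^ j) ^ (e x) = ep (real (j * e x) * (1 / real (P * Q)))"
      by (simp add: z_def ep_pow power_mult[symmetric] mult.commute)
    also have "real (j * e x) * (1 / real (P * Q)) =
        (real j * of_int (t x) / real P + real j * of_int (s x) / real Q) - of_int (int j * m)"
      using P0 Q0 by (simp add: re field_simps)
    finally show ?thesis by (metis ep_eqI add_diff_cancel_left' diff_add_cancel)
  qed
  define G where "G = (\<Sum>x\<in>X. monom 1 (e x) :: int poly)"
  have FGj: "FG P Q X t s j j = ipoly G (z ^ j)" for j
    unfolding FG_def G_def using X by (simp add: ipoly_sum key)
  have zn: "z ^ (P * Q) = 1" using P0 Q0 by (simp add: z_def ep_pow ep_int[of 1, simplified])
  have "ipoly G z = 0" using F11 FGj[of 1] by simp
  then have "ipoly G (z ^ K) = 0" using galois[OF zn _ _ K0 copK] P0 Q0 by simp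
  then have FKK: "FG P Q X t s K K = 0" using FGj by simp
  obtain a where a: "int K - int k = int P * a"
    using K(1) by (metis cong_int_iff cong_iff_dvd_diff dvdE)
  obtain b where b: "int K - int l = int Q * b"
    using K(2) by (metis cong_int_iff cong_iff_dvd_diff dvdE)
  have rK: "real K = real k + real P * of_int a" using a
    by (metis add_diff_cancel_left' diff_add_cancel of_int_add of_int_mult of_int_of_nat_eq)
  have rK2: "real K = real l + real Q * of_int b" using b
    by (metis add_diff_cancel_left' diff_add_cancel of_int_add of_int_mult of_int_of_nat_eq)
  have "FG P Q X t s k l = FG P Q X t s K K"
    unfolding FG_def
  proof (intro sum.cong refl ep_eqI)
    fix x
    have "real k * of_int (t x) / real P + real l * of_int (s x) / real Q
        - (real K * of_int (t x) / real P + real K * of_int (s x) / real Q)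
        = - (of_int a * of_int (t x) + of_int b * of_int (s x))"
    proof -
      have e1: "real K * of_int (t x) / real P = real k * of_int (t x) / real P + of_int a * of_int (t x)"
        using P0 by (simp add: rK field_simps)
      have e2: "real K * of_int (s x) / real Q = real l * of_int (s x) / real Q + of_int b * of_int (s x)"
        using Q0 by (simp add: rK2 field_simps)
      show ?thesis by (simp add: e1 e2)
    qed
    then show "real k * of_int (t x) / real P + real l * of_int (s x) / real Q
        - (real K * of_int (t x) / real P + real K * of_int (s x) / real Q)
        = of_int (- (a * t x + b * s x))" by simp
  qed
  then show ?thesis using FKK by simp
qed


lemma sum_split2:
  fixes h :: "nat \<Rightarrow> nat \<Rightarrow> 'b::ab_group_add"
  assumes z: "\<And>k l. 0 < k \<Longrightarrow> k < M1 \<Longrightarrow> 0 < l \<Longrightarrow> l < M2 \<Longrightarrow> h k l = 0"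
    and M1: "M1 > 0" and M2: "M2 > 0"
  shows "(\<Sum>k<M1. \<Sum>l<M2. h k l) = (\<Sum>l<M2. h 0 l) + (\<Sum>k<M1. h k 0) - h 0 0"
proof -
  have inner: "(\<Sum>l<M2. h k l) = h k 0" if "0 < k" "k < M1" for k
  proof -
    have "(\<Sum>l<M2. h k l) = h k 0 + (\<Sum>l\<in>{..<M2} - {0}. h k l)"
      using M2 by (subst sum.remove[of _ 0]) auto
    also have "(\<Sum>l\<in>{..<M2} - {0}. h k l) = 0"
      using z that by (intro sum.neutral) auto
    finally show ?thesis by simp
  qed
  have "(\<Sum>k<M1. \<Sum>l<M2. h k l) = (\<Sum>l<M2. h 0 l) + (\<Sum>k\<in>{..<M1} - {0}. \<Sum>l<M2. h k l)"
    using M1 by (subst sum.remove[of _ 0]) auto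
  also have "(\<Sum>k\<in>{..<M1} - {0}. \<Sum>l<M2. h k l) = (\<Sum>k\<in>{..<M1} - {0}. h k 0)"
    using inner by (intro sum.cong) auto
  also have "(\<Sum>k\<in>{..<M1} - {0}. h k 0) = (\<Sum>k<M1. h k 0) - h 0 0"
    using M1 by (subst sum.remove[of _ 0, where A="{..<M1}"]) auto
  finally show ?thesis by (simp add: algebra_simps)
qed

lemma sum_fill_le:
  fixes f :: "nat \<Rightarrow> nat"
  assumes ge: "\<And>c. c < M \<Longrightarrow> f c \<ge> a" and s: "(\<Sum>c<M. f c) = M * a"
  shows "\<And>c. c < M \<Longrightarrow> f c = a"
proof (rule ccontr)
  fix c assume c: "c < M" and ne: "f c \<noteq> a"
  then have "f c > a" using ge by (simp add: order_le_neq_trans)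
  then have "(\<Sum>c<M. a) < (\<Sum>c<M. f c)"
    using c ge by (intro sum_strict_mono_ex1) auto
  then show False using s by simp
qed

lemma arith_E2:
  fixes P Q :: nat and row col :: "nat \<Rightarrow> nat"
  assumes P: "prime P" and Q: "prime Q" and PQ: "P \<noteq> Q"
    and sr: "(\<Sum>c<P. row c) = P * Q" and sc: "(\<Sum>d<Q. col d) = P * Q"
    and eq: "\<And>c d. c < P \<Longrightarrow> d < Q \<Longrightarrow> \<exists>m. P * Q * m + P * Q = Q * col d + P * row c"
  shows "(\<forall>c<P. row c = Q) \<or> (\<forall>d<Q. col d = P)"
proof -
  have P0: "0 < P" and Q0: "0 < Q" using P Q by (auto simp: prime_gt_0_nat)
  have copPQ: "coprime P Q" using P Q PQ by (simp add: primes_coprime)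
  have Pcol: "P dvd col d" if dQ: "d < Q" for d
  proof -
    obtain m where m: "P * Q * m + P * Q = Q * col d + P * row 0" using eq[OF P0 dQ] by blast
    have "P dvd Q * col d + P * row 0" by (metis m dvd_add dvd_mult dvd_triv_left mult.assoc)
    then have "P dvd Q * col d" by (simp add: dvd_add_left_iff)
    then show ?thesis using copPQ by (simp add: coprime_dvd_mult_right_iff)
  qed
  show ?thesis
  proof (cases "\<exists>d<Q. col d = 0")
    case True
    then obtain d0 where d0: "d0 < Q" "col d0 = 0" by blast
    have "row c \<ge> Q" if cP: "c < P" for c
    proof -
      obtain m where m: "P * Q * m + P * Q = Q * col d0 + P * row c" using eq[OF cP d0(1)] by blast
      then have "P * (Q * m + Q) = P * row c" using d0 by (simp add: algebra_simps)
      then have "row c = Q * m + Q" using P0 by simp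
      then show ?thesis by simp
    qed
    then have "\<forall>c<P. row c = Q" using sum_fill_le[of P Q row] sr by (simp add: mult.commute)
    then show ?thesis by blast
  next
    case False
    have "col d \<ge> P" if "d < Q" for d
    proof -
      have "col d \<noteq> 0" using False that by auto
      then show ?thesis using Pcol[OF that] by (simp add: dvd_imp_le)
    qed
    then have "\<forall>d<Q. col d = P" using sum_fill_le[of Q P col] sc by (simp add: mult.commute)
    then show ?thesis by blast
  qed
qed

lemma E2:
  fixes P Q :: nat and X :: "'a set"
  assumes P: "prime P" and Q: "prime Q" and PQ: "P \<noteq> Q" and X: "finite X" and cX: "card X = P * Q"
    and z: "\<And>k l. 0 < k \<Longrightarrow> k < P \<Longrightarrow> 0 < l \<Longrightarrow> l < Q \<Longrightarrow> FG P Q X t s k l = 0"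
  shows "(\<forall>c<P. card {x\<in>X. int P dvd t x - int c} = Q) \<or> (\<forall>d<Q. card {x\<in>X. int Q dvd s x - int d} = P)"
proof -
  have P0: "0 < P" and Q0: "0 < Q" using P Q by (auto simp: prime_gt_0_nat)
  define row where "row c = card {x\<in>X. int P dvd t x - int c}" for c
  define col where "col d = card {x\<in>X. int Q dvd s x - int d}" for d
  define m where "m c d = card {x\<in>X. int P dvd t x - int c \<and> int Q dvd s x - int d}" for c d
  have eqc: "of_nat P * of_nat Q * of_nat (m c d) = (of_nat Q * of_nat (col d) + of_nat P * of_nat (row c) - of_nat (card X) :: complex)"
    if "c < P" "d < Q" for c d
  proof -
    define h where "h k l = ep (- (real k * of_int (int c) / real P + real l * of_int (int d) / real Q)) * FG P Q X t s k l" for k l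
    have "of_nat P * of_nat Q * of_nat (m c d) = (\<Sum>k<P. \<Sum>l<Q. h k l)"
      unfolding h_def m_def by (rule inv2[OF X P0 Q0, symmetric])
    also have "\<dots> = (\<Sum>l<Q. h 0 l) + (\<Sum>k<P. h k 0) - h 0 0"
      by (rule sum_split2[OF _ P0 Q0]) (simp add: h_def z)
    also have "(\<Sum>l<Q. h 0 l) = of_nat Q * of_nat (col d)"
      unfolding h_def FG_def col_def using inv1[OF X Q0, of "int d" s] by simp
    also have "(\<Sum>k<P. h k 0) = of_nat P * of_nat (row c)"
      unfolding h_def FG_def row_def using inv1[OF X P0, of "int c" t] by simp
    also have "h 0 0 = of_nat (card X)" unfolding h_def FG_def by simp
    finally show ?thesis .
  qed
  have eqn: "\<exists>mm. P * Q * mm + P * Q = Q * col d + P * row c" if "c < P" "d < Q" for c d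
  proof -
    have "(of_nat (P * Q * m c d + P * Q) :: complex) = of_nat (Q * col d + P * row c)"
      using eqc[OF that] cX by (simp add: algebra_simps)
    then have "P * Q * m c d + P * Q = Q * col d + P * row c" by (simp only: of_nat_eq_iff)
    then show ?thesis by blast
  qed
  have partP: "(\<Sum>c<P. row c) = card X" if "M = P" for M
  proof -
    have "card X = card (\<Union>c<P. {x\<in>X. int P dvd t x - int c})"
    proof (rule arg_cong[where f = card])
      show "X = (\<Union>c<P. {x\<in>X. int P dvd t x - int c})"
      proof (rule set_eqI, rule iffI)
        fix x assume x: "x \<in> X"
        define c where "c = nat (t x mod int P)"
        have "c < P" unfolding c_def using P0 by (simp add: nat_less_iff)
        moreover have "int P dvd t x - int c" unfolding c_def using P0
          by (simp add: mod_eq_dvd_iff[symmetric])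
        ultimately show "x \<in> (\<Union>c<P. {x\<in>X. int P dvd t x - int c})" using x by blast
      qed auto
    qed
    also have "\<dots> = (\<Sum>c<P. row c)" unfolding row_def
    proof (rule card_UN_disjoint)
      show "finite {..<P}" by simp
      show "\<forall>i\<in>{..<P}. finite {x \<in> X. int P dvd t x - int i}" using X by auto
      show "\<forall>i\<in>{..<P}. \<forall>j\<in>{..<P}. i \<noteq> j \<longrightarrow> {x \<in> X. int P dvd t x - int i} \<inter> {x \<in> X. int P dvd t x - int j} = {}"
      proof (intro ballI impI)
        fix i j assume ij: "i \<in> {..<P}" "j \<in> {..<P}" "i \<noteq> j"
        show "{x \<in> X. int P dvd t x - int i} \<inter> {x \<in> X. int P dvd t x - int j} = {}"
        proof (rule ccontr)
          assume "\<not> ?thesis"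
          then obtain x where x1: "int P dvd t x - int i" and x2: "int P dvd t x - int j" by blast
          have "int i - int j = (t x - int j) - (t x - int i)" by simp
          then have "int P dvd int i - int j" using x1 x2 by (metis dvd_diff)
          then have "int i mod int P = int j mod int P" by (simp add: mod_eq_dvd_iff)
          then show False using ij by simp
        qed
      qed
    qed
    finally show ?thesis by simp
  qed
  have partQ: "(\<Sum>d<Q. col d) = card X"
  proof -
    have "card X = card (\<Union>d<Q. {x\<in>X. int Q dvd s x - int d})"
    proof (rule arg_cong[where f = card])
      show "X = (\<Union>d<Q. {x\<in>X. int Q dvd s x - int d})"
      proof (rule set_eqI, rule iffI)
        fix x assume x: "x \<in> X"
        define d where "d = nat (s x mod int Q)"
        have "d < Q" unfolding d_def using Q0 by (simp add: nat_less_iff)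
        moreover have "int Q dvd s x - int d" unfolding d_def using Q0
          by (simp add: mod_eq_dvd_iff[symmetric])
        ultimately show "x \<in> (\<Union>d<Q. {x\<in>X. int Q dvd s x - int d})" using x by blast
      qed auto
    qed
    also have "\<dots> = (\<Sum>d<Q. col d)" unfolding col_def
    proof (rule card_UN_disjoint)
      show "finite {..<Q}" by simp
      show "\<forall>i\<in>{..<Q}. finite {x \<in> X. int Q dvd s x - int i}" using X by auto
      show "\<forall>i\<in>{..<Q}. \<forall>j\<in>{..<Q}. i \<noteq> j \<longrightarrow> {x \<in> X. int Q dvd s x - int i} \<inter> {x \<in> X. int Q dvd s x - int j} = {}"
      proof (intro ballI impI)
        fix i j assume ij: "i \<in> {..<Q}" "j \<in> {..<Q}" "i \<noteq> j"
        show "{x \<in> X. int Q dvd s x - int i} \<inter> {x \<in> X. int Q dvd s x - int j} = {}"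
        proof (rule ccontr)
          assume "\<not> ?thesis"
          then obtain x where x1: "int Q dvd s x - int i" and x2: "int Q dvd s x - int j" by blast
          have "int i - int j = (s x - int j) - (s x - int i)" by simp
          then have "int Q dvd int i - int j" using x1 x2 by (metis dvd_diff)
          then have "int i mod int Q = int j mod int Q" by (simp add: mod_eq_dvd_iff)
          then show False using ij by simp
        qed
      qed
    qed
    finally show ?thesis by simp
  qed
  have "(\<forall>c<P. row c = Q) \<or> (\<forall>d<Q. col d = P)"
    by (rule arith_E2[OF P Q PQ]) (use partP partQ cX eqn in auto)
  then show ?thesis unfolding row_def col_def .
qed


definition tp :: "elt \<Rightarrow> elt \<Rightarrow> int" where
  "tp w x = fst (fst w) * fst (fst x) + snd (fst w) * snd (fst x)"
definition tq :: "elt \<Rightarrow> elt \<Rightarrow> int" where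
  "tq w x = fst (snd w) * fst (snd x) + snd (snd w) * snd (snd x)"

lemma chr_ep: "chr (int P) (int Q) w x = ep (of_int (tp w x) / real P + of_int (tq w x) / real Q)"
  by (cases w; cases x) (auto simp: chr_def ep_def tp_def tq_def)

lemma chrset_FG: "chr_set (int P) (int Q) w X = FG P Q X (tp w) (tq w) 1 1"
  by (simp add: chr_set_def FG_def chr_ep)

lemma part_mod:
  fixes M :: nat
  assumes M: "M > 0"
  shows "X = (\<Union>c<M. {x\<in>X. int M dvd t x - int c})"
proof (rule set_eqI, rule iffI)
  fix x assume x: "x \<in> X"
  define c where "c = nat (t x mod int M)"
  have "c < M" unfolding c_def using M by (simp add: nat_less_iff)
  moreover have "int M dvd t x - int c" unfolding c_def using M
    by (simp add: mod_eq_dvd_iff[symmetric])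
  ultimately show "x \<in> (\<Union>c<M. {x\<in>X. int M dvd t x - int c})" using x by blast
qed auto

lemma part_disj:
  fixes M :: nat
  assumes "i < M" "j < M" "i \<noteq> j"
  shows "{x \<in> X. int M dvd t x - int i} \<inter> {x \<in> X. int M dvd t x - int j} = {}"
proof (rule ccontr)
  assume "\<not> ?thesis"
  then obtain x where x1: "int M dvd t x - int i" and x2: "int M dvd t x - int j" by blast
  have "int i - int j = (t x - int j) - (t x - int i)" by simp
  then have "int M dvd int i - int j" using x1 x2 by (metis dvd_diff)
  then have "int i mod int M = int j mod int M" by (simp add: mod_eq_dvd_iff)
  then show False using assms by simp
qed

lemma group1:
  fixes M K :: nat and X :: "'a set"
  assumes X: "finite X" and M: "M > 1"
    and rows: "\<And>c. c < M \<Longrightarrow> card {x\<in>X. int M dvd t x - int c} = K"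
  shows "(\<Sum>x\<in>X. ep (of_int (t x) / real M)) = 0"
proof -
  have M0: "M > 0" using M by simp
  have "(\<Sum>x\<in>X. ep (of_int (t x) / real M)) = (\<Sum>c<M. \<Sum>x\<in>{x\<in>X. int M dvd t x - int c}. ep (of_int (t x) / real M))"
    apply (subst part_mod[OF M0, of X t])
    apply (rule sum.UNION_disjoint)
      apply simp
     apply (simp add: X)
    apply (intro ballI impI, rule part_disj; simp)
    done
  also have "\<dots> = (\<Sum>c<M. \<Sum>x\<in>{x\<in>X. int M dvd t x - int c}. ep (real c * of_int 1 / real M))"
  proof (intro sum.cong refl)
    fix c x assume "x \<in> {x\<in>X. int M dvd t x - int c}"
    then obtain m where m: "t x - int c = int M * m" by (auto elim: dvdE)
    then have "of_int (t x) = real c + real M * of_int m" by (metis add_diff_cancel_left' diff_add_cancel of_int_add of_int_mult of_int_of_nat_eq)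
    then have "of_int (t x) / real M - real c * of_int 1 / real M = of_int m" using M0 by (simp add: field_simps)
    then show "ep (of_int (t x) / real M) = ep (real c * of_int 1 / real M)" by (rule ep_eqI)
  qed
  also have "\<dots> = (\<Sum>c<M. of_nat K * ep (real c * of_int 1 / real M))"
    using rows by simp
  also have "\<dots> = of_nat K * (\<Sum>c<M. ep (real c * of_int 1 / real M))"
    by (simp add: sum_distrib_left)
  also have "(\<Sum>c<M. ep (real c * of_int 1 / real M)) = 0"
    using geom[OF M0, of 1] M by simp
  finally show ?thesis by simp
qed

lemma T_lemma:
  fixes P Q :: nat and X :: "elt set"
  assumes P: "prime P" and Q: "prime Q" and PQ: "P \<noteq> Q" and X: "finite X" and cX: "card X = P * Q"
    and w0: "chr_set (int P) (int Q) ((w1, w2), (w3, w4)) X = 0"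
  shows "chr_set (int P) (int Q) ((w1, w2), (0, 0)) X = 0 \<or> chr_set (int P) (int Q) ((0, 0), (w3, w4)) X = 0"
proof -
  define w where "w = ((w1, w2), (w3, w4))"
  have P1: "P > 1" and Q1: "Q > 1" using prime_gt_1_nat[OF P] prime_gt_1_nat[OF Q] by auto
  have F11: "FG P Q X (tp w) (tq w) 1 1 = 0" using w0 by (simp add: chrset_FG w_def)
  have z: "FG P Q X (tp w) (tq w) k l = 0" if "0 < k" "k < P" "0 < l" "l < Q" for k l
    by (rule GalC[OF P Q PQ X F11]) (use that in \<open>auto dest: dvd_imp_le\<close>)
  from E2[OF P Q PQ X cX z]
  consider "\<forall>c<P. card {x\<in>X. int P dvd tp w x - int c} = Q" | "\<forall>d<Q. card {x\<in>X. int Q dvd tq w x - int d} = P"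
    by blast
  then show ?thesis
  proof cases
    case 1
    have "(\<Sum>x\<in>X. ep (of_int (tp w x) / real P)) = 0" by (rule group1[OF X P1]) (use 1 in auto)
    then have "chr_set (int P) (int Q) ((w1, w2), (0, 0)) X = 0"
      by (simp add: chr_set_def chr_ep tp_def tq_def w_def)
    then show ?thesis by blast
  next
    case 2
    have "(\<Sum>x\<in>X. ep (of_int (tq w x) / real Q)) = 0" by (rule group1[OF X Q1]) (use 2 in auto)
    then have "chr_set (int P) (int Q) ((0, 0), (w3, w4)) X = 0"
      by (simp add: chr_set_def chr_ep tp_def tq_def w_def)
    then show ?thesis by blast
  qed
qed

lemma sum_only00:
  fixes h :: "nat \<Rightarrow> nat \<Rightarrow> 'b::comm_monoid_add"
  assumes z: "\<And>k l. k < M1 \<Longrightarrow> l < M2 \<Longrightarrow> (k, l) \<noteq> (0, 0) \<Longrightarrow> h k l = 0"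
    and M1: "M1 > 0" and M2: "M2 > 0"
  shows "(\<Sum>k<M1. \<Sum>l<M2. h k l) = h 0 0"
proof -
  have "(\<Sum>k<M1. \<Sum>l<M2. h k l) = (\<Sum>l<M2. h 0 l) + (\<Sum>k\<in>{..<M1} - {0}. \<Sum>l<M2. h k l)"
    using M1 by (subst sum.remove[of _ 0]) auto
  also have "(\<Sum>k\<in>{..<M1} - {0}. \<Sum>l<M2. h k l) = 0"
    using z by (intro sum.neutral ballI) auto
  also have "(\<Sum>l<M2. h 0 l) = h 0 0 + (\<Sum>l\<in>{..<M2} - {0}. h 0 l)"
    using M2 by (subst sum.remove[of _ 0]) auto
  also have "(\<Sum>l\<in>{..<M2} - {0}. h 0 l) = 0"
  proof (rule sum.neutral, rule ballI)
    fix l assume "l \<in> {..<M2} - {0}"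
    then show "h 0 l = 0" using M1 by (intro z) auto
  qed
  finally show ?thesis by simp
qed

lemma notall:
  fixes R S :: nat and X :: "'a set"
  assumes R: "prime R" and X: "finite X" and cX: "card X = R * S" and nd: "\<not> R dvd S"
  shows "\<exists>u1 u2. u1 < R \<and> u2 < R \<and> (u1, u2) \<noteq> (0, 0) \<and> FG R R X a1 a2 u1 u2 \<noteq> 0"
proof (rule ccontr)
  assume "\<not> ?thesis"
  then have z: "FG R R X a1 a2 u1 u2 = 0" if "u1 < R" "u2 < R" "(u1, u2) \<noteq> (0, 0)" for u1 u2
    using that by blast
  have R0: "R > 0" using R by (simp add: prime_gt_0_nat)
  define h where "h k l = ep (- (real k * of_int 0 / real R + real l * of_int 0 / real R)) * FG R R X a1 a2 k l" for k l
  have "of_nat R * of_nat R * of_nat (card {x\<in>X. int R dvd a1 x - 0 \<and> int R dvd a2 x - 0}) = (\<Sum>k<R. \<Sum>l<R. h k l)"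
    unfolding h_def by (rule inv2[OF X R0 R0, symmetric])
  also have "\<dots> = h 0 0" by (rule sum_only00[OF _ R0 R0]) (simp add: h_def z)
  also have "h 0 0 = of_nat (card X)" by (simp add: h_def FG_def)
  finally have "(of_nat (R * R * card {x\<in>X. int R dvd a1 x - 0 \<and> int R dvd a2 x - 0}) :: complex) = of_nat (R * S)"
    using cX by simp
  then have "R * R * card {x\<in>X. int R dvd a1 x - 0 \<and> int R dvd a2 x - 0} = R * S"
    by (simp only: of_nat_eq_iff)
  then have "R * card {x\<in>X. int R dvd a1 x - 0 \<and> int R dvd a2 x - 0} = S" using R0 by (simp add: mult.assoc)
  then have "R dvd S" by (metis dvd_triv_left)
  then show False using nd by simp
qed


lemma dvd_lin:
  fixes M u1 u2 d1 d2 k kk a1 a2 :: int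
  assumes "M dvd u1 - k * d1" "M dvd u2 - k * d2" "M dvd k - kk"
  shows "M dvd (u1 * a1 + u2 * a2) - kk * (d1 * a1 + d2 * a2)"
proof -
  have "(u1 * a1 + u2 * a2) - kk * (d1 * a1 + d2 * a2)
      = (u1 - k * d1) * a1 + (u2 - k * d2) * a2 + (k - kk) * (d1 * a1 + d2 * a2)"
    by (simp add: algebra_simps)
  then show ?thesis using assms by (simp add: dvd_add dvd_mult2)
qed

lemma kn_props:
  fixes P :: nat and k :: int
  assumes P0: "P > 0" and nk: "\<not> int P dvd k"
  shows "\<not> P dvd nat (k mod int P)" "int P dvd k - int (nat (k mod int P))"
proof -
  have nn: "k mod int P \<ge> 0" using P0 by simp
  then have ik: "int (nat (k mod int P)) = k mod int P" by simp
  show "int P dvd k - int (nat (k mod int P))" unfolding ik by (simp add: mod_eq_dvd_iff[symmetric])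
  show "\<not> P dvd nat (k mod int P)"
  proof
    assume "P dvd nat (k mod int P)"
    then have "int P dvd k mod int P" by (metis ik int_dvd_int_iff)
    then have "int P dvd k" by (simp add: dvd_mod_iff)
    then show False using nk by simp
  qed
qed

lemma scaleP:
  fixes P Q :: nat and X :: "elt set" and k d1 d2 u1 u2 :: int
  assumes P: "prime P" and Q: "prime Q" and PQ: "P \<noteq> Q" and X: "finite X"
    and z: "chr_set (int P) (int Q) ((d1, d2), (0, 0)) X = 0"
    and nk: "\<not> int P dvd k" and c1: "int P dvd u1 - k * d1" and c2: "int P dvd u2 - k * d2"
  shows "chr_set (int P) (int Q) ((u1, u2), (0, 0)) X = 0"
proof -
  have P0: "P > 0" and Q0: "Q > 0" using P Q by (auto simp: prime_gt_0_nat)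
  define dw :: elt where "dw = ((d1, d2), (0, 0))"
  define kn where "kn = nat (k mod int P)"
  have kn1: "\<not> P dvd kn" and kn2: "int P dvd k - int kn" using kn_props[OF P0 nk] by (simp_all add: kn_def)
  have F11: "FG P Q X (tp dw) (tq dw) 1 1 = 0" using z by (simp add: chrset_FG dw_def)
  have Q1: "\<not> Q dvd 1" using prime_gt_1_nat[OF Q] by simp
  have Fk: "FG P Q X (tp dw) (tq dw) kn 1 = 0" by (rule GalC[OF P Q PQ X F11 kn1 Q1])
  have "chr_set (int P) (int Q) ((u1, u2), (0, 0)) X = FG P Q X (tp dw) (tq dw) kn 1"
    unfolding chrset_FG FG_def
  proof (intro sum.cong refl)
    fix x assume "x \<in> X"
    have "int P dvd tp ((u1, u2), (0, 0)) x - int kn * tp dw x"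
      unfolding tp_def dw_def using dvd_lin[OF c1 c2 kn2] by simp
    then obtain m where m: "tp ((u1, u2), (0, 0)) x - int kn * tp dw x = int P * m" by (elim dvdE)
    have "real 1 * of_int (tp ((u1, u2), (0, 0)) x) / real P + real 1 * of_int (tq ((u1, u2), (0, 0)) x) / real Q
        - (real kn * of_int (tp dw x) / real P + real 1 * of_int (tq dw x) / real Q) = of_int m"
    proof -
      have "of_int (tp ((u1, u2), (0, 0)) x) = real kn * of_int (tp dw x) + real P * of_int m"
      proof -
        have "tp ((u1, u2), (0, 0)) x = int kn * tp dw x + int P * m" using m by simp
        then have "(of_int (tp ((u1, u2), (0, 0)) x) :: real) = of_int (int kn * tp dw x + int P * m)" by simp
        then show ?thesis by simp
      qed
      then show ?thesis using P0 by (simp add: tq_def dw_def add_divide_distrib)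
    qed
    then show "ep (real 1 * of_int (tp ((u1, u2), (0, 0)) x) / real P + real 1 * of_int (tq ((u1, u2), (0, 0)) x) / real Q)
        = ep (real kn * of_int (tp dw x) / real P + real 1 * of_int (tq dw x) / real Q)" by (rule ep_eqI)
  qed
  then show ?thesis using Fk by simp
qed

lemma scaleQ:
  fixes P Q :: nat and X :: "elt set" and k d1 d2 u1 u2 :: int
  assumes P: "prime P" and Q: "prime Q" and PQ: "P \<noteq> Q" and X: "finite X"
    and z: "chr_set (int P) (int Q) ((0, 0), (d1, d2)) X = 0"
    and nk: "\<not> int Q dvd k" and c1: "int Q dvd u1 - k * d1" and c2: "int Q dvd u2 - k * d2"
  shows "chr_set (int P) (int Q) ((0, 0), (u1, u2)) X = 0"
proof -
  have P0: "P > 0" and Q0: "Q > 0" using P Q by (auto simp: prime_gt_0_nat)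
  define dw :: elt where "dw = ((0, 0), (d1, d2))"
  define kn where "kn = nat (k mod int Q)"
  have kn1: "\<not> Q dvd kn" and kn2: "int Q dvd k - int kn" using kn_props[OF Q0 nk] by (simp_all add: kn_def)
  have F11: "FG P Q X (tp dw) (tq dw) 1 1 = 0" using z by (simp add: chrset_FG dw_def)
  have P1: "\<not> P dvd 1" using prime_gt_1_nat[OF P] by simp
  have Fk: "FG P Q X (tp dw) (tq dw) 1 kn = 0" by (rule GalC[OF P Q PQ X F11 P1 kn1])
  have "chr_set (int P) (int Q) ((0, 0), (u1, u2)) X = FG P Q X (tp dw) (tq dw) 1 kn"
    unfolding chrset_FG FG_def
  proof (intro sum.cong refl)
    fix x assume "x \<in> X"
    have "int Q dvd tq ((0, 0), (u1, u2)) x - int kn * tq dw x"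
      unfolding tq_def dw_def using dvd_lin[OF c1 c2 kn2] by simp
    then obtain m where m: "tq ((0, 0), (u1, u2)) x - int kn * tq dw x = int Q * m" by (elim dvdE)
    have "real 1 * of_int (tp ((0, 0), (u1, u2)) x) / real P + real 1 * of_int (tq ((0, 0), (u1, u2)) x) / real Q
        - (real 1 * of_int (tp dw x) / real P + real kn * of_int (tq dw x) / real Q) = of_int m"
    proof -
      have "of_int (tq ((0, 0), (u1, u2)) x) = real kn * of_int (tq dw x) + real Q * of_int m"
      proof -
        have "tq ((0, 0), (u1, u2)) x = int kn * tq dw x + int Q * m" using m by simp
        then have "(of_int (tq ((0, 0), (u1, u2)) x) :: real) = of_int (int kn * tq dw x + int Q * m)" by simp
        then show ?thesis by simp
      qed
      then show ?thesis using Q0 by (simp add: tp_def dw_def add_divide_distrib)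
    qed
    then show "ep (real 1 * of_int (tp ((0, 0), (u1, u2)) x) / real P + real 1 * of_int (tq ((0, 0), (u1, u2)) x) / real Q)
        = ep (real 1 * of_int (tp dw x) / real P + real kn * of_int (tq dw x) / real Q)" by (rule ep_eqI)
  qed
  then show ?thesis using Fk by simp
qed

lemma inv_int:
  fixes P :: nat and e :: int
  assumes P: "prime P" and ne: "\<not> int P dvd e"
  shows "\<exists>i. int P dvd e * i - 1"
proof -
  have pP: "prime (int P)" using P by (simp add: prime_nat_int_transfer)
  have "coprime (int P) e" by (rule prime_imp_coprime[OF pP ne])
  then have "coprime e (int P)" by (simp add: coprime_commute)
  then obtain i where "[e * i = 1] (mod int P)" using cong_solve_coprime_int by blast
  then have "int P dvd e * i - 1" by (simp add: cong_iff_dvd_diff)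
  then show ?thesis by blast
qed

lemma dir_lemma:
  fixes P :: nat and \<alpha> \<beta> e1 e2 :: int
  assumes P: "prime P" and nz: "\<not> (int P dvd \<alpha> \<and> int P dvd \<beta>)"
    and ne: "\<not> (int P dvd e1 \<and> int P dvd e2)" and h: "int P dvd \<beta> * e1 - \<alpha> * e2"
  shows "\<exists>k. \<not> int P dvd k \<and> int P dvd \<alpha> - k * e1 \<and> int P dvd \<beta> - k * e2"
proof (cases "int P dvd e1")
  case False
  then obtain i where i: "int P dvd e1 * i - 1" using inv_int[OF P] by blast
  define k where "k = \<alpha> * i"
  have d1: "int P dvd \<alpha> - k * e1"
  proof -
    have "\<alpha> - k * e1 = - (\<alpha> * (e1 * i - 1))" by (simp add: k_def algebra_simps)
    then show ?thesis using i by simp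
  qed
  have d2: "int P dvd \<beta> - k * e2"
  proof -
    have "\<beta> - k * e2 = i * (\<beta> * e1 - \<alpha> * e2) - \<beta> * (e1 * i - 1)" by (simp add: k_def algebra_simps)
    then show ?thesis using i h by (simp add: dvd_diff)
  qed
  have "\<not> int P dvd k"
  proof
    assume "int P dvd k"
    then have "int P dvd k * e1" "int P dvd k * e2" by simp_all
    then have "int P dvd \<alpha>" "int P dvd \<beta>" using d1 d2 by (metis dvd_add diff_add_cancel)+
    then show False using nz by simp
  qed
  then show ?thesis using d1 d2 by blast
next
  case True
  then have ne2: "\<not> int P dvd e2" using ne by blast
  then obtain i where i: "int P dvd e2 * i - 1" using inv_int[OF P] by blast
  define k where "k = \<beta> * i"
  have d2: "int P dvd \<beta> - k * e2"
  proof -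
    have "\<beta> - k * e2 = - (\<beta> * (e2 * i - 1))" by (simp add: k_def algebra_simps)
    then show ?thesis using i by simp
  qed
  have "int P dvd \<alpha> * e2"
  proof -
    have "\<alpha> * e2 = \<beta> * e1 - (\<beta> * e1 - \<alpha> * e2)" by simp
    then show ?thesis using h True by (metis dvd_diff dvd_mult)
  qed
  then have pa: "int P dvd \<alpha>" using ne2 P by (simp add: prime_dvd_mult_iff prime_nat_int_transfer)
  have d1: "int P dvd \<alpha> - k * e1" using pa True by (simp add: dvd_diff)
  have "\<not> int P dvd k"
  proof
    assume "int P dvd k"
    then have "int P dvd k * e2" by simp
    then have "int P dvd \<beta>" using d2 by (metis dvd_add diff_add_cancel)
    then show False using nz pa by simp
  qed
  then show ?thesis using d1 d2 by blast
qed

lemma dir2: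
  fixes P :: nat and \<alpha> \<beta> e1 e2 :: int
  assumes P: "prime P" and nz: "\<not> (int P dvd \<alpha> \<and> int P dvd \<beta>)" and h: "int P dvd \<beta> * e1 - \<alpha> * e2"
  shows "\<exists>t. int P dvd e1 - t * \<alpha> \<and> int P dvd e2 - t * \<beta>"
proof (cases "int P dvd e1 \<and> int P dvd e2")
  case True
  then show ?thesis by (intro exI[of _ 0]) simp
next
  case False
  obtain k where k: "\<not> int P dvd k" "int P dvd \<alpha> - k * e1" "int P dvd \<beta> - k * e2"
    using dir_lemma[OF P nz False h] by blast
  obtain j where j: "int P dvd k * j - 1" using inv_int[OF P k(1)] by blast
  have "e1 - j * \<alpha> = - (e1 * (k * j - 1)) + j * (\<alpha> - k * e1) * (-1)" by (simp add: algebra_simps)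
  then have a: "int P dvd e1 - j * \<alpha>" using j k by (metis dvd_add dvd_minus_iff dvd_mult dvd_mult2)
  have "e2 - j * \<beta> = - (e2 * (k * j - 1)) + j * (\<beta> - k * e2) * (-1)" by (simp add: algebra_simps)
  then have b: "int P dvd e2 - j * \<beta>" using j k by (metis dvd_add dvd_minus_iff dvd_mult dvd_mult2)
  show ?thesis using a b by blast
qed


lemma mod_expand: "(z::int) mod m = z - m * (z div m)"
  by (metis minus_mult_div_eq_mod)

lemma tp_gsub:
  "tp (gsub (int P) (int Q) a b) x = tp a x - tp b x - int P *
     (((fst (fst a) - fst (fst b)) div int P) * fst (fst x) + ((snd (fst a) - snd (fst b)) div int P) * snd (fst x))"
  by (simp add: gsub_def tp_def mod_expand algebra_simps)

lemma tq_gsub: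
  "tq (gsub (int P) (int Q) a b) x = tq a x - tq b x - int Q *
     (((fst (snd a) - fst (snd b)) div int Q) * fst (snd x) + ((snd (snd a) - snd (snd b)) div int Q) * snd (snd x))"
  by (simp add: gsub_def tq_def mod_expand algebra_simps)

lemma chr_gsub:
  assumes P0: "P > 0" and Q0: "Q > 0"
  shows "chr (int P) (int Q) (gsub (int P) (int Q) a b) x = chr (int P) (int Q) a x * cnj (chr (int P) (int Q) b x)"
proof -
  define mP where "mP = ((fst (fst a) - fst (fst b)) div int P) * fst (fst x) + ((snd (fst a) - snd (fst b)) div int P) * snd (fst x)"
  define mQ where "mQ = ((fst (snd a) - fst (snd b)) div int Q) * fst (snd x) + ((snd (snd a) - snd (snd b)) div int Q) * snd (snd x)"
  define g where "g = gsub (int P) (int Q) a b"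
  have e1: "of_int (tp g x) = (of_int (tp a x) - of_int (tp b x) - real P * of_int mP :: real)"
    unfolding g_def mP_def tp_gsub by simp
  have e2: "of_int (tq g x) = (of_int (tq a x) - of_int (tq b x) - real Q * of_int mQ :: real)"
    unfolding g_def mQ_def tq_gsub by simp
  have "of_int (tp g x) / real P + of_int (tq g x) / real Q
      - ((of_int (tp a x) / real P + of_int (tq a x) / real Q) + - (of_int (tp b x) / real P + of_int (tq b x) / real Q))
      = of_int (- mP - mQ)"
    using P0 Q0 unfolding e1 e2 by (simp add: diff_divide_distrib)
  then have "ep (of_int (tp g x) / real P + of_int (tq g x) / real Q)
      = ep ((of_int (tp a x) / real P + of_int (tq a x) / real Q) + - (of_int (tp b x) / real P + of_int (tq b x) / real Q))"
    by (rule ep_eqI)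
  moreover have "chr (int P) (int Q) a x * cnj (chr (int P) (int Q) b x)
      = ep ((of_int (tp a x) / real P + of_int (tq a x) / real Q) + - (of_int (tp b x) / real P + of_int (tq b x) / real Q))"
    by (simp only: chr_ep ep_cnj, simp only: ep_add)
  ultimately show ?thesis unfolding g_def by (simp only: chr_ep)
qed

lemma chr_comm: "chr (int P) (int Q) w x = chr (int P) (int Q) x w"
  by (simp add: chr_ep tp_def tq_def mult.commute)

lemma chr_norm: "chr (int P) (int Q) a x * cnj (chr (int P) (int Q) a x) = 1"
  by (simp add: chr_ep ep_norm)

lemma duality:
  fixes P Q :: nat and S L :: "elt set"
  assumes P0: "P > 0" and Q0: "Q > 0" and S: "finite S" and L: "finite L" and cL: "card L = card S"
    and hyp: "\<forall>l\<in>L. \<forall>m\<in>L. l \<noteq> m \<longrightarrow> chr_set (int P) (int Q) (gsub (int P) (int Q) l m) S = 0"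
  shows "\<forall>s\<in>S. \<forall>s'\<in>S. s \<noteq> s' \<longrightarrow> chr_set (int P) (int Q) (gsub (int P) (int Q) s s') L = 0"
proof -
  define f where "f l s = chr (int P) (int Q) l s" for l s
  define N where "N = card S"
  define B where "B s s' = (\<Sum>l\<in>L. f l s * cnj (f l s'))" for s s'
  define A where "A l m = (\<Sum>s\<in>S. f l s * cnj (f m s))" for l m
  have Bc: "B s s' = chr_set (int P) (int Q) (gsub (int P) (int Q) s s') L" for s s'
    unfolding B_def chr_set_def f_def
    by (intro sum.cong refl) (simp add: chr_gsub[OF P0 Q0] chr_comm[of _ _ s] chr_comm[of _ _ s'])
  have Ac: "A l m = chr_set (int P) (int Q) (gsub (int P) (int Q) l m) S" for l m
    unfolding A_def chr_set_def f_def by (simp add: chr_gsub[OF P0 Q0])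
  have Bd: "B s s = of_nat N" for s
    unfolding B_def f_def N_def using cL by (simp add: chr_norm)
  have Ad: "A l l = of_nat N" for l
    unfolding A_def f_def N_def by (simp add: chr_norm)
  have key: "(\<Sum>s\<in>S. \<Sum>s'\<in>S. B s s' * cnj (B s s')) = (\<Sum>l\<in>L. \<Sum>m\<in>L. A l m * cnj (A l m))"
  proof -
    define g where "g s s' l m = (f l s * cnj (f m s)) * (cnj (f l s') * f m s')" for s s' l m
    have "(\<Sum>s\<in>S. \<Sum>s'\<in>S. B s s' * cnj (B s s')) = (\<Sum>s\<in>S. \<Sum>s'\<in>S. \<Sum>l\<in>L. \<Sum>m\<in>L. g s s' l m)"
      unfolding B_def g_def by (simp add: sum_product cnj_sum algebra_simps)
    also have "\<dots> = (\<Sum>s\<in>S. \<Sum>l\<in>L. \<Sum>s'\<in>S. \<Sum>m\<in>L. g s s' l m)"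
      by (rule sum.cong[OF refl], rule sum.swap)
    also have "\<dots> = (\<Sum>l\<in>L. \<Sum>s\<in>S. \<Sum>s'\<in>S. \<Sum>m\<in>L. g s s' l m)"
      by (rule sum.swap)
    also have "\<dots> = (\<Sum>l\<in>L. \<Sum>s\<in>S. \<Sum>m\<in>L. \<Sum>s'\<in>S. g s s' l m)"
      by (rule sum.cong[OF refl], rule sum.cong[OF refl], rule sum.swap)
    also have "\<dots> = (\<Sum>l\<in>L. \<Sum>m\<in>L. \<Sum>s\<in>S. \<Sum>s'\<in>S. g s s' l m)"
      by (rule sum.cong[OF refl], rule sum.swap)
    also have "\<dots> = (\<Sum>l\<in>L. \<Sum>m\<in>L. A l m * cnj (A l m))"
      unfolding A_def g_def by (simp add: sum_product cnj_sum algebra_simps)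
    finally show ?thesis .
  qed
  have rhs: "(\<Sum>l\<in>L. \<Sum>m\<in>L. A l m * cnj (A l m)) = of_nat N * of_nat N * of_nat N"
  proof -
    have "(\<Sum>m\<in>L. A l m * cnj (A l m)) = of_nat N * of_nat N" if l: "l \<in> L" for l
    proof -
      have "(\<Sum>m\<in>L. A l m * cnj (A l m)) = A l l * cnj (A l l) + (\<Sum>m\<in>L - {l}. A l m * cnj (A l m))"
        using L l by (subst sum.remove[of _ l]) auto
      also have "(\<Sum>m\<in>L - {l}. A l m * cnj (A l m)) = 0"
        using hyp l by (intro sum.neutral) (auto simp: Ac)
      finally show ?thesis by (simp add: Ad)
    qed
    then have "(\<Sum>l\<in>L. \<Sum>m\<in>L. A l m * cnj (A l m)) = (\<Sum>l\<in>L. of_nat N * of_nat N)" by simp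
    also have "\<dots> = of_nat N * of_nat N * of_nat N" using cL by (simp add: N_def)
    finally show ?thesis .
  qed
  have lhs: "(\<Sum>s\<in>S. \<Sum>s'\<in>S. B s s' * cnj (B s s'))
      = of_nat N * of_nat N * of_nat N + (\<Sum>s\<in>S. \<Sum>s'\<in>S - {s}. B s s' * cnj (B s s'))"
  proof -
    have "(\<Sum>s'\<in>S. B s s' * cnj (B s s')) = of_nat N * of_nat N + (\<Sum>s'\<in>S - {s}. B s s' * cnj (B s s'))"
      if s: "s \<in> S" for s
      using S s by (subst sum.remove[of _ s]) (auto simp: Bd)
    then have "(\<Sum>s\<in>S. \<Sum>s'\<in>S. B s s' * cnj (B s s')) = (\<Sum>s\<in>S. of_nat N * of_nat N + (\<Sum>s'\<in>S - {s}. B s s' * cnj (B s s')))"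
      by simp
    also have "\<dots> = of_nat N * of_nat N * of_nat N + (\<Sum>s\<in>S. \<Sum>s'\<in>S - {s}. B s s' * cnj (B s s'))"
      by (simp add: sum.distrib N_def)
    finally show ?thesis .
  qed
  have z: "(\<Sum>s\<in>S. \<Sum>s'\<in>S - {s}. B s s' * cnj (B s s')) = 0"
    using key rhs lhs by simp
  have sq: "B s s' * cnj (B s s') = complex_of_real ((cmod (B s s'))\<^sup>2)" for s s'
    by (rule complex_norm_square[symmetric])
  have "(\<Sum>s\<in>S. \<Sum>s'\<in>S - {s}. (cmod (B s s'))\<^sup>2) = 0"
  proof -
    have "complex_of_real (\<Sum>s\<in>S. \<Sum>s'\<in>S - {s}. (cmod (B s s'))\<^sup>2) = 0"
      using z by (simp add: sq)
    then show ?thesis by (simp only: of_real_eq_0_iff)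
  qed
  then have "\<forall>s\<in>S. (\<Sum>s'\<in>S - {s}. (cmod (B s s'))\<^sup>2) = 0"
    using S by (subst (asm) sum_nonneg_eq_0_iff) (auto intro: sum_nonneg)
  then have "\<forall>s\<in>S. \<forall>s'\<in>S - {s}. (cmod (B s s'))\<^sup>2 = 0"
    using S by (auto simp: sum_nonneg_eq_0_iff)
  then show ?thesis by (auto simp: Bc[symmetric])
qed


lemma connP:
  "chr_set (int P) (int Q) ((int u1, int u2), (0, 0)) X = FG P P X (\<lambda>x. fst (fst x)) (\<lambda>x. snd (fst x)) u1 u2"
  unfolding chr_set_def FG_def by (intro sum.cong refl) (simp add: chr_ep tp_def tq_def add_divide_distrib)

lemma connQ:
  "chr_set (int P) (int Q) ((0, 0), (int v1, int v2)) X = FG Q Q X (\<lambda>x. fst (snd x)) (\<lambda>x. snd (snd x)) v1 v2"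
  unfolding chr_set_def FG_def by (intro sum.cong refl) (simp add: chr_ep tp_def tq_def add_divide_distrib)

lemma chr_set_zero: "chr_set (int P) (int Q) ((0, 0), (0, 0)) X = of_nat (card X)"
  unfolding chr_set_def by (simp add: chr_ep tp_def tq_def)

lemma small_dvd_zero:
  fixes d :: int and M :: nat
  assumes "0 \<le> d" "d < int M" "int M dvd d"
  shows "d = 0"
proof (rule ccontr)
  assume "d \<noteq> 0"
  then have "d > 0" using assms(1) by simp
  then have "int M \<le> d" using zdvd_imp_le assms(3) by blast
  then show False using assms(2) by simp
qed

lemma small_diff:
  fixes t t' :: int and M :: nat
  assumes "0 \<le> t" "t < int M" "0 \<le> t'" "t' < int M" "int M dvd t - t'"
  shows "t = t'"
proof (cases "t' \<le> t")
  case True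
  then have "t - t' = 0" using assms by (intro small_dvd_zero[of _ M]) auto
  then show ?thesis by simp
next
  case False
  have "int M dvd t' - t" using assms(5) by (metis dvd_minus_iff minus_diff_eq)
  then have "t' - t = 0" using assms False by (intro small_dvd_zero[of _ M]) auto
  then show ?thesis by simp
qed

lemma nz_pair:
  fixes M :: nat and u1 u2 :: nat
  assumes "u1 < M" "u2 < M" "(u1, u2) \<noteq> (0, 0)"
  shows "\<not> (int M dvd int u1 \<and> int M dvd int u2)"
proof
  assume "int M dvd int u1 \<and> int M dvd int u2"
  then have "int u1 = 0" "int u2 = 0" using assms small_dvd_zero[of "int u1" M] small_dvd_zero[of "int u2" M] by auto
  then show False using assms by simp
qed

lemma lin_mod:
  fixes M :: int and b a y1 y2 z1 z2 :: int
  assumes "(b * y1 - a * y2) mod M = (b * z1 - a * z2) mod M"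
  shows "M dvd b * ((y1 - z1) mod M) - a * ((y2 - z2) mod M)"
proof -
  have h: "M dvd (b * y1 - a * y2) - (b * z1 - a * z2)" using assms by (simp add: mod_eq_dvd_iff)
  have "b * ((y1 - z1) mod M) - a * ((y2 - z2) mod M)
      = ((b * y1 - a * y2) - (b * z1 - a * z2)) - M * (b * ((y1 - z1) div M) - a * ((y2 - z2) div M))"
    by (simp add: mod_expand algebra_simps)
  then show ?thesis using h by (simp add: dvd_diff)
qed

lemma core:
  fixes P Q :: nat and X Y :: "elt set"
  assumes P: "prime P" and Q: "prime Q" and PQ: "P \<noteq> Q" and X: "finite X" and cX: "card X = P * Q"
    and Yg: "Y \<subseteq> grp (int P) (int Q)" and cY: "card Y = P * Q"
    and hyp: "\<forall>y\<in>Y. \<forall>y'\<in>Y. y \<noteq> y' \<longrightarrow> chr_set (int P) (int Q) (gsub (int P) (int Q) y y') X = 0"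
  shows "tile (int P) (int Q) Y"
proof -
  have P0: "P > 0" and Q0: "Q > 0" using P Q by (auto simp: prime_gt_0_nat)
  have ndPQ: "\<not> P dvd Q" using P Q PQ primes_dvd_imp_eq by blast
  have ndQP: "\<not> Q dvd P" using P Q PQ primes_dvd_imp_eq by blast
  have cX': "card X = Q * P" using cX by simp
  obtain u1 u2 where u: "u1 < P" "u2 < P" "(u1, u2) \<noteq> (0, 0)"
      "FG P P X (\<lambda>x. fst (fst x)) (\<lambda>x. snd (fst x)) u1 u2 \<noteq> 0"
    using notall[OF P X cX ndPQ] by blast
  obtain v1 v2 where v: "v1 < Q" "v2 < Q" "(v1, v2) \<noteq> (0, 0)"
      "FG Q Q X (\<lambda>x. fst (snd x)) (\<lambda>x. snd (snd x)) v1 v2 \<noteq> 0"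
    using notall[OF Q X cX' ndQP] by blast
  define \<alpha> where "\<alpha> = int u1"
  define \<beta> where "\<beta> = int u2"
  define \<gamma> where "\<gamma> = int v1"
  define \<delta> where "\<delta> = int v2"
  have nPu: "chr_set (int P) (int Q) ((\<alpha>, \<beta>), (0, 0)) X \<noteq> 0"
    using u(4) by (simp add: connP \<alpha>_def \<beta>_def)
  have nQv: "chr_set (int P) (int Q) ((0, 0), (\<gamma>, \<delta>)) X \<noteq> 0"
    using v(4) by (simp add: connQ \<gamma>_def \<delta>_def)
  have nzu: "\<not> (int P dvd \<alpha> \<and> int P dvd \<beta>)" unfolding \<alpha>_def \<beta>_def by (rule nz_pair[OF u(1-3)])
  have nzv: "\<not> (int Q dvd \<gamma> \<and> int Q dvd \<delta>)" unfolding \<gamma>_def \<delta>_def by (rule nz_pair[OF v(1-3)])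
  have cX0: "chr_set (int P) (int Q) ((0, 0), (0, 0)) X \<noteq> 0"
    using cX P0 Q0 by (simp add: chr_set_zero)
  define \<Phi> where "\<Phi> y = ((\<beta> * fst (fst y) - \<alpha> * snd (fst y)) mod int P, (\<delta> * fst (snd y) - \<gamma> * snd (snd y)) mod int Q)" for y :: elt
  have inj: "inj_on \<Phi> Y"
  proof (rule inj_onI, rule ccontr)
    fix y y' assume yY: "y \<in> Y" and y'Y: "y' \<in> Y" and eq: "\<Phi> y = \<Phi> y'" and ne: "y \<noteq> y'"
    obtain y1 y2 y3 y4 where yd: "y = ((y1, y2), (y3, y4))" by (metis prod.exhaust)
    obtain z1 z2 z3 z4 where zd: "y' = ((z1, z2), (z3, z4))" by (metis prod.exhaust)
    define d1 where "d1 = (y1 - z1) mod int P"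
    define d2 where "d2 = (y2 - z2) mod int P"
    define d3 where "d3 = (y3 - z3) mod int Q"
    define d4 where "d4 = (y4 - z4) mod int Q"
    have gs: "gsub (int P) (int Q) y y' = ((d1, d2), (d3, d4))"
      by (simp add: gsub_def yd zd d1_def d2_def d3_def d4_def)
    have "chr_set (int P) (int Q) (gsub (int P) (int Q) y y') X = 0" using hyp yY y'Y ne by blast
    then have c0: "chr_set (int P) (int Q) ((d1, d2), (d3, d4)) X = 0" by (simp only: gs)
    have hP: "int P dvd \<beta> * d1 - \<alpha> * d2"
      unfolding d1_def d2_def by (rule lin_mod) (use eq in \<open>simp add: \<Phi>_def yd zd\<close>)
    have hQ: "int Q dvd \<delta> * d3 - \<gamma> * d4"
      unfolding d3_def d4_def by (rule lin_mod) (use eq in \<open>simp add: \<Phi>_def yd zd\<close>)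
    have rd1: "0 \<le> d1" "d1 < int P" and rd2: "0 \<le> d2" "d2 < int P"
      using P0 by (simp_all add: d1_def d2_def)
    have rd3: "0 \<le> d3" "d3 < int Q" and rd4: "0 \<le> d4" "d4 < int Q"
      using Q0 by (simp_all add: d3_def d4_def)
    from T_lemma[OF P Q PQ X cX c0]
    show False
    proof
      assume zA: "chr_set (int P) (int Q) ((d1, d2), (0, 0)) X = 0"
      show False
      proof (cases "int P dvd d1 \<and> int P dvd d2")
        case True
        then have "d1 = 0" "d2 = 0" using small_dvd_zero rd1 rd2 by blast+
        then show False using zA cX0 by simp
      next
        case False
        obtain k where k: "\<not> int P dvd k" "int P dvd \<alpha> - k * d1" "int P dvd \<beta> - k * d2"
          using dir_lemma[OF P nzu False hP] by blast
        have "chr_set (int P) (int Q) ((\<alpha>, \<beta>), (0, 0)) X = 0"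
          by (rule scaleP[OF P Q PQ X zA k])
        then show False using nPu by simp
      qed
    next
      assume zB: "chr_set (int P) (int Q) ((0, 0), (d3, d4)) X = 0"
      show False
      proof (cases "int Q dvd d3 \<and> int Q dvd d4")
        case True
        then have "d3 = 0" "d4 = 0" using small_dvd_zero rd3 rd4 by blast+
        then show False using zB cX0 by simp
      next
        case False
        obtain k where k: "\<not> int Q dvd k" "int Q dvd \<gamma> - k * d3" "int Q dvd \<delta> - k * d4"
          using dir_lemma[OF Q nzv False hQ] by blast
        have "chr_set (int P) (int Q) ((0, 0), (\<gamma>, \<delta>)) X = 0"
          by (rule scaleQ[OF P Q PQ X zB k])
        then show False using nQv by simp
      qed
    qed
  qed
  define Bx where "Bx = {0..<int P} \<times> {0..<int Q}"
  have cBx: "card Bx = P * Q" by (simp add: Bx_def card_cartesian_product)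
  have imgsub: "\<Phi> ` Y \<subseteq> Bx" using P0 Q0 by (auto simp: Bx_def \<Phi>_def)
  have img: "\<Phi> ` Y = Bx"
    by (rule card_subset_eq) (use imgsub inj cY cBx in \<open>auto simp: Bx_def card_image\<close>)
  define tmap where "tmap = (\<lambda>(t, s). ((t * \<alpha> mod int P, t * \<beta> mod int P), (s * \<gamma> mod int Q, s * \<delta> mod int Q)))"
  define T where "T = tmap ` Bx"
  have Tg: "T \<subseteq> grp (int P) (int Q)" using P0 Q0 by (auto simp: T_def tmap_def grp_def)
  have injT: "inj_on tmap Bx"
  proof (rule inj_onI)
    fix a b assume a: "a \<in> Bx" and b: "b \<in> Bx" and e: "tmap a = tmap b"
    obtain t s where ad: "a = (t, s)" by (cases a)
    obtain t' s' where bd: "b = (t', s')" by (cases b)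
    have e1: "t * \<alpha> mod int P = t' * \<alpha> mod int P" "t * \<beta> mod int P = t' * \<beta> mod int P"
      using e by (simp_all add: tmap_def ad bd)
    have e2: "s * \<gamma> mod int Q = s' * \<gamma> mod int Q" "s * \<delta> mod int Q = s' * \<delta> mod int Q"
      using e by (simp_all add: tmap_def ad bd)
    have pP: "prime (int P)" and pQ: "prime (int Q)" using P Q by (simp_all add: prime_nat_int_transfer)
    have "int P dvd (t - t') * \<alpha>" "int P dvd (t - t') * \<beta>"
      using e1 by (simp_all add: mod_eq_dvd_iff left_diff_distrib)
    then have "int P dvd t - t'" using nzu pP by (auto simp: prime_dvd_mult_iff)
    moreover have "0 \<le> t" "t < int P" "0 \<le> t'" "t' < int P" using a b by (auto simp: Bx_def ad bd)
    ultimately have tt: "t = t'" using small_diff by blast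
    have "int Q dvd (s - s') * \<gamma>" "int Q dvd (s - s') * \<delta>"
      using e2 by (simp_all add: mod_eq_dvd_iff left_diff_distrib)
    then have "int Q dvd s - s'" using nzv pQ by (auto simp: prime_dvd_mult_iff)
    moreover have "0 \<le> s" "s < int Q" "0 \<le> s'" "s' < int Q" using a b by (auto simp: Bx_def ad bd)
    ultimately have ss: "s = s'" using small_diff by blast
    show "a = b" using tt ss ad bd by simp
  qed
  have cT: "card T = P * Q" unfolding T_def using card_image[OF injT] cBx by simp
  have cG: "card (grp (int P) (int Q)) = P * Q * (P * Q)"
    by (simp add: grp_def card_cartesian_product)
  have sumset: "{gadd (int P) (int Q) s t |s t. s \<in> Y \<and> t \<in> T} = grp (int P) (int Q)"
  proof (rule set_eqI, rule iffI)
    fix g assume "g \<in> {gadd (int P) (int Q) s t |s t. s \<in> Y \<and> t \<in> T}"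
    then show "g \<in> grp (int P) (int Q)" using P0 Q0 by (auto simp: gadd_def grp_def)
  next
    fix g assume gG: "g \<in> grp (int P) (int Q)"
    obtain g1 g2 g3 g4 where gd: "g = ((g1, g2), (g3, g4))" by (metis prod.exhaust)
    have rg: "0 \<le> g1" "g1 < int P" "0 \<le> g2" "g2 < int P" "0 \<le> g3" "g3 < int Q" "0 \<le> g4" "g4 < int Q"
      using gG by (auto simp: grp_def gd)
    have "\<Phi> g \<in> Bx" using P0 Q0 by (auto simp: Bx_def \<Phi>_def)
    then obtain y where yY: "y \<in> Y" and yg: "\<Phi> y = \<Phi> g" using img by (metis imageE)
    obtain y1 y2 y3 y4 where yd: "y = ((y1, y2), (y3, y4))" by (metis prod.exhaust)
    have h1: "int P dvd \<beta> * (g1 - y1) - \<alpha> * (g2 - y2)"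
    proof -
      have "(\<beta> * g1 - \<alpha> * g2) mod int P = (\<beta> * y1 - \<alpha> * y2) mod int P"
        using yg by (simp add: \<Phi>_def yd gd)
      then have "int P dvd (\<beta> * g1 - \<alpha> * g2) - (\<beta> * y1 - \<alpha> * y2)" by (simp add: mod_eq_dvd_iff)
      then show ?thesis by (simp add: algebra_simps)
    qed
    have h2: "int Q dvd \<delta> * (g3 - y3) - \<gamma> * (g4 - y4)"
    proof -
      have "(\<delta> * g3 - \<gamma> * g4) mod int Q = (\<delta> * y3 - \<gamma> * y4) mod int Q"
        using yg by (simp add: \<Phi>_def yd gd)
      then have "int Q dvd (\<delta> * g3 - \<gamma> * g4) - (\<delta> * y3 - \<gamma> * y4)" by (simp add: mod_eq_dvd_iff)
      then show ?thesis by (simp add: algebra_simps)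
    qed
    obtain t where t: "int P dvd (g1 - y1) - t * \<alpha>" "int P dvd (g2 - y2) - t * \<beta>"
      using dir2[OF P nzu h1] by blast
    obtain s where s: "int Q dvd (g3 - y3) - s * \<gamma>" "int Q dvd (g4 - y4) - s * \<delta>"
      using dir2[OF Q nzv h2] by blast
    define k where "k = tmap (t mod int P, s mod int Q)"
    have kT: "k \<in> T" unfolding k_def T_def Bx_def using P0 Q0 by auto
    have fix1: "(a + (b mod M) * c mod M) mod M = h" if "M dvd h - a - b * c" "0 \<le> h" "h < M" for a b c h M :: int
    proof -
      have "(a + (b mod M) * c mod M) mod M = (a + b * c) mod M"
        by (metis mod_add_right_eq mod_mult_left_eq)
      also have "\<dots> = h mod M"
      proof -
        have eqm: "(a + b * c) - h = - (h - a - b * c)" by simp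
        have "M dvd (a + b * c) - h" unfolding eqm using that(1) by (simp only: dvd_minus_iff)
        then show ?thesis by (simp add: mod_eq_dvd_iff)
      qed
      also have "\<dots> = h" using that(2,3) by simp
      finally show ?thesis .
    qed
    have "gadd (int P) (int Q) y k = g"
      unfolding k_def tmap_def gadd_def yd gd
      using fix1[of "int P" g1 y1 t \<alpha>] fix1[of "int P" g2 y2 t \<beta>]
        fix1[of "int Q" g3 y3 s \<gamma>] fix1[of "int Q" g4 y4 s \<delta>] t s rg
      by (simp add: algebra_simps)
    then show "g \<in> {gadd (int P) (int Q) s t |s t. s \<in> Y \<and> t \<in> T}" using yY kT by blast
  qed
  show ?thesis unfolding tile_def
    by (intro exI[of _ T] conjI Tg sumset) (simp add: cY cT cG)
qed


theorem proposition4p3: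
  fixes p q :: int and S :: "elt set"
  assumes "prime p" and "prime q" and "p \<noteq> q"
    and "S \<subseteq> grp p q"
    and "spectral p q S"
    and "card S = nat (p * q)"
  shows "tile p q S"
proof -
  define P where "P = nat p"
  define Q where "Q = nat q"
  have p0: "p > 0" using assms(1) by (simp add: prime_gt_0_int)
  have q0: "q > 0" using assms(2) by (simp add: prime_gt_0_int)
  have hp: "p = int P" using p0 by (simp add: P_def)
  have hq: "q = int Q" using q0 by (simp add: Q_def)
  have P: "prime P" using assms(1) hp by (simp add: prime_nat_int_transfer)
  have Q: "prime Q" using assms(2) hq by (simp add: prime_nat_int_transfer)
  have PQ: "P \<noteq> Q" using assms(3) hp hq by auto
  have P0: "P > 0" and Q0: "Q > 0" using P Q by (auto simp: prime_gt_0_nat)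
  have cS: "card S = P * Q" using assms(6) hp hq by (simp add: nat_mult_distrib)
  have fS: "finite S" using cS P0 Q0 by (metis card_ge_0_finite mult_pos_pos)
  obtain L where L: "L \<subseteq> grp p q" "card L = card S"
      "\<forall>l\<in>L. \<forall>m\<in>L. l \<noteq> m \<longrightarrow> chr_set p q (gsub p q l m) S = 0"
    using assms(5) unfolding spectral_def by blast
  have fL: "finite L" using L(2) cS P0 Q0 by (metis card_ge_0_finite mult_pos_pos)
  have hypL: "\<forall>l\<in>L. \<forall>m\<in>L. l \<noteq> m \<longrightarrow> chr_set (int P) (int Q) (gsub (int P) (int Q) l m) S = 0"
    using L(3) hp hq by simp
  have dual: "\<forall>s\<in>S. \<forall>s'\<in>S. s \<noteq> s' \<longrightarrow> chr_set (int P) (int Q) (gsub (int P) (int Q) s s') L = 0"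
    by (rule duality[OF P0 Q0 fS fL L(2) hypL])
  have Sg: "S \<subseteq> grp (int P) (int Q)" using assms(4) hp hq by simp
  have cL: "card L = P * Q" using L(2) cS by simp
  have "tile (int P) (int Q) S" by (rule core[OF P Q PQ fL cL Sg cS dual])
  then show ?thesis using hp hq by simp
qed

end
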